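(* Let $\mathcal P$ be a GTDS instance with rational discount factor $\lambda$, rational weights $a_1,\dots,a_k$, and rational target $t$. If $\mathcal P$ has no solution, then the $<$-universality and $\le$-universality problems with threshold $t$ are decidable over the class of discounted-sum automata over finite words (resp. over infinite words) with discount factor $\lambda$ and all transition weights in $\{a_1,\dots,a_k\}$.
   Context: An instance of GTDS consists of a rational discount factor $0<\lambda<1$, a rational target $t$, and rational weights $a_1,\dots,a_k$; a solution is an infinite $w\in\{a_1,\dots,a_k\}^\omega$ with $\sum_{i=0}^\infty w(i)\lambda^i=t$. A discounted-sum automaton (DSA) is $\langle\Sigma,Q,q_{in},Q_F,\delta,\gamma,\lambda\rangle$ with finite alphabet, finite state set $Q$, initial state $q_{in}$, accepting states $Q_F$, transition relation $\delta\subseteq Q\times\Sigma\times Q$, weights $\gamma:\delta\to\mathbb Q$, discount factor $\lambda$. A run on a word $\sigma_1\sigma_2\cdots$ is $q_0,\sigma_1,q_1,\dots$ with $q_0=q_{in}$, $(q_i,\sigma_{i+1},q_{i+1})\in\delta$; a finite run is accepting if it ends in $Q_F$, and every infinite run is accepting; a run's value is $\sum_i\lambda^i\gamma(q_i,\sigma_{i+1},q_{i+1})$; $\mathcal A(w)$ is the infimum of values of accepting runs on $w$. The $<$-universality (resp. $\le$-universality) problem with threshold $t$ asks whether $\mathcal A(w)<t$ (resp. $\mathcal A(w)\le t$) for every word $w$ (finite words for finite-word automata, infinite words for infinite-word automata). *)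

theory Defs
  imports Complex_Main "HOL-Library.Nat_Bijection" "HOL-Library.Extended_Real"
begin

datatype recf = Zero | Succ | Proj nat | Comp recf "recf list"
  | PrimRec recf recf | Minim recf

inductive reval :: "recf \<Rightarrow> nat list \<Rightarrow> nat \<Rightarrow> bool" where
  zero: "reval Zero xs 0"
| succ: "reval Succ (x # xs) (Suc x)"
| proj: "i < length xs \<Longrightarrow> reval (Proj i) xs (xs ! i)"
| comp: "list_all2 (\<lambda>g y. reval g xs y) gs ys \<Longrightarrow> reval f ys z \<Longrightarrow> reval (Comp f gs) xs z"
| prim0: "reval f xs y \<Longrightarrow> reval (PrimRec f g) (0 # xs) y"
| primS: "reval (PrimRec f g) (n # xs) y \<Longrightarrow> reval g (n # y # xs) z
          \<Longrightarrow> reval (PrimRec f g) (Suc n # xs) z"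
| minim: "reval f (n # xs) 0 \<Longrightarrow> (\<forall>m<n. \<exists>y. y > 0 \<and> reval f (m # xs) y)
          \<Longrightarrow> reval (Minim f) xs n"

definition decidable_set :: "nat set \<Rightarrow> bool" where
  "decidable_set A \<longleftrightarrow> (\<exists>f. \<forall>n. reval f [n] (if n \<in> A then 1 else 0))"

text \<open>An automaton is given by its
  alphabet (a finite list of letters), its initial state, its accepting states,
  and a finite table mapping transitions (p, sigma, q) to an index i of the
  weight a_i in the fixed weight list.  Every value of this type is thus a DSA
  whose weights lie in the given weight set, and every such DSA (up to renaming
  of states and letters) arises this way.\<close>
record dsa =
  alph :: "nat list"
  init :: nat
  final :: "nat list"
  tab :: "((nat \<times> nat \<times> nat) \<times> nat) list"

definition delta :: "real list \<Rightarrow> dsa \<Rightarrow> (nat \<times> nat \<times> nat) set" where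
  "delta as A = {tr. \<exists>i. map_of (tab A) tr = Some i \<and> i < length as}"

definition gamma :: "real list \<Rightarrow> dsa \<Rightarrow> nat \<times> nat \<times> nat \<Rightarrow> real" where
  "gamma as A tr = as ! the (map_of (tab A) tr)"

text \<open>Finite runs on a finite word w (the run is rho 0, ..., rho (length w)).\<close>
definition fin_run :: "real list \<Rightarrow> dsa \<Rightarrow> nat list \<Rightarrow> (nat \<Rightarrow> nat) \<Rightarrow> bool" where
  "fin_run as A w \<rho> \<longleftrightarrow> \<rho> 0 = init A \<and>
     (\<forall>i < length w. (\<rho> i, w ! i, \<rho> (Suc i)) \<in> delta as A)"

definition fin_accepting :: "real list \<Rightarrow> dsa \<Rightarrow> nat list \<Rightarrow> (nat \<Rightarrow> nat) \<Rightarrow> bool" where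
  "fin_accepting as A w \<rho> \<longleftrightarrow> fin_run as A w \<rho> \<and> \<rho> (length w) \<in> set (final A)"

definition fin_value :: "real \<Rightarrow> real list \<Rightarrow> dsa \<Rightarrow> nat list \<Rightarrow> (nat \<Rightarrow> nat) \<Rightarrow> real" where
  "fin_value lam as A w \<rho> = (\<Sum>i<length w. lam ^ i * gamma as A (\<rho> i, w ! i, \<rho> (Suc i)))"

text \<open>Value of the automaton on a finite word: infimum over accepting runs
  (+infinity if there is none).\<close>
definition fin_aut_val :: "real \<Rightarrow> real list \<Rightarrow> dsa \<Rightarrow> nat list \<Rightarrow> ereal" where
  "fin_aut_val lam as A w =
     Inf {ereal (fin_value lam as A w \<rho>) | \<rho>. fin_accepting as A w \<rho>}"

text \<open>Infinite runs on an infinite word w; every infinite run is accepting.\<close>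
definition inf_run :: "real list \<Rightarrow> dsa \<Rightarrow> (nat \<Rightarrow> nat) \<Rightarrow> (nat \<Rightarrow> nat) \<Rightarrow> bool" where
  "inf_run as A w \<rho> \<longleftrightarrow> \<rho> 0 = init A \<and> (\<forall>i. (\<rho> i, w i, \<rho> (Suc i)) \<in> delta as A)"

definition inf_value :: "real \<Rightarrow> real list \<Rightarrow> dsa \<Rightarrow> (nat \<Rightarrow> nat) \<Rightarrow> (nat \<Rightarrow> nat) \<Rightarrow> real" where
  "inf_value lam as A w \<rho> = (\<Sum>i. lam ^ i * gamma as A (\<rho> i, w i, \<rho> (Suc i)))"

definition inf_aut_val :: "real \<Rightarrow> real list \<Rightarrow> dsa \<Rightarrow> (nat \<Rightarrow> nat) \<Rightarrow> ereal" where
  "inf_aut_val lam as A w =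
     Inf {ereal (inf_value lam as A w \<rho>) | \<rho>. inf_run as A w \<rho>}"

definition fin_words :: "dsa \<Rightarrow> nat list set" where
  "fin_words A = {w. set w \<subseteq> set (alph A)}"

definition inf_words :: "dsa \<Rightarrow> (nat \<Rightarrow> nat) set" where
  "inf_words A = {w. \<forall>i. w i \<in> set (alph A)}"

definition fin_lt_universal :: "real \<Rightarrow> real list \<Rightarrow> real \<Rightarrow> dsa \<Rightarrow> bool" where
  "fin_lt_universal lam as t A \<longleftrightarrow> (\<forall>w \<in> fin_words A. fin_aut_val lam as A w < ereal t)"

definition fin_le_universal :: "real \<Rightarrow> real list \<Rightarrow> real \<Rightarrow> dsa \<Rightarrow> bool" where
  "fin_le_universal lam as t A \<longleftrightarrow> (\<forall>w \<in> fin_words A. fin_aut_val lam as A w \<le> ereal t)"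

definition inf_lt_universal :: "real \<Rightarrow> real list \<Rightarrow> real \<Rightarrow> dsa \<Rightarrow> bool" where
  "inf_lt_universal lam as t A \<longleftrightarrow> (\<forall>w \<in> inf_words A. inf_aut_val lam as A w < ereal t)"

definition inf_le_universal :: "real \<Rightarrow> real list \<Rightarrow> real \<Rightarrow> dsa \<Rightarrow> bool" where
  "inf_le_universal lam as t A \<longleftrightarrow> (\<forall>w \<in> inf_words A. inf_aut_val lam as A w \<le> ereal t)"

definition dec_entry :: "nat \<Rightarrow> (nat \<times> nat \<times> nat) \<times> nat" where
  "dec_entry n = (case prod_decode n of (p, r1) \<Rightarrow>
     (case prod_decode r1 of (s, r2) \<Rightarrow>
       (case prod_decode r2 of (q, i) \<Rightarrow> ((p, s, q), i))))"

definition dec_dsa :: "nat \<Rightarrow> dsa" where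
  "dec_dsa c = (case prod_decode c of (a, r1) \<Rightarrow>
     (case prod_decode r1 of (q0, r2) \<Rightarrow>
       (case prod_decode r2 of (f, tr) \<Rightarrow>
         \<lparr>alph = list_decode a, init = q0, final = list_decode f,
          tab = map dec_entry (list_decode tr)\<rparr>)))"

definition decidable_dsa_prop :: "(dsa \<Rightarrow> bool) \<Rightarrow> bool" where
  "decidable_dsa_prop P \<longleftrightarrow> decidable_set {c. P (dec_dsa c)}"

definition gtds_solution :: "real \<Rightarrow> real \<Rightarrow> real list \<Rightarrow> (nat \<Rightarrow> real) \<Rightarrow> bool" where
  "gtds_solution lam t as w \<longleftrightarrow> (\<forall>i. w i \<in> set as) \<and> (\<lambda>i. w i * lam ^ i) sums t"

end

theory Submission
  imports Defs
begin

definition rf :: "nat \<Rightarrow> ((nat \<Rightarrow> nat) \<Rightarrow> nat) \<Rightarrow> bool" where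
  "rf n f \<longleftrightarrow> (\<forall>e e'. (\<forall>i<n. e i = e' i) \<longrightarrow> f e = f e') \<and>
     (\<exists>r. \<forall>xs. length xs = n \<longrightarrow> reval r xs (f (\<lambda>i. xs ! i)))"

lemma rf_local: "rf n f \<Longrightarrow> (\<And>i. i < n \<Longrightarrow> e i = e' i) \<Longrightarrow> f e = f e'"
  unfolding rf_def by blast

lemma rf_cong: "rf n f \<Longrightarrow> (\<And>e. f e = g e) \<Longrightarrow> rf n g"
proof -
  assume "rf n f" "\<And>e. f e = g e"
  then have "f = g" by auto
  with \<open>rf n f\<close> show ?thesis by simp
qed

lemma rf_comp:
  assumes f: "rf m f" and g: "\<And>j. j < m \<Longrightarrow> rf n (g j)"
  shows "rf n (\<lambda>e. f (\<lambda>j. g j e))"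
proof -
  from f obtain r where r: "\<forall>xs. length xs = m \<longrightarrow> reval r xs (f (\<lambda>i. xs!i))"
    unfolding rf_def by blast
  have fl: "\<And>e e'. (\<And>i. i<m \<Longrightarrow> e i = e' i) \<Longrightarrow> f e = f e'" using f rf_local by blast
  have "\<forall>j<m. \<exists>r. \<forall>xs. length xs = n \<longrightarrow> reval r xs (g j (\<lambda>i. xs!i))"
    using g unfolding rf_def by blast
  then obtain R where R: "\<And>j xs. j < m \<Longrightarrow> length xs = n \<Longrightarrow> reval (R j) xs (g j (\<lambda>i. xs!i))"
    by metis
  have gl: "\<And>j e e'. j<m \<Longrightarrow> (\<And>i. i<n \<Longrightarrow> e i = e' i) \<Longrightarrow> g j e = g j e'"
    using g rf_local by blast
  show ?thesis unfolding rf_def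
  proof (intro conjI allI impI)
    fix e e' :: "nat \<Rightarrow> nat" assume "\<forall>i<n. e i = e' i"
    then show "f (\<lambda>j. g j e) = f (\<lambda>j. g j e')" using fl gl by metis
  next
    show "\<exists>r. \<forall>xs. length xs = n \<longrightarrow> reval r xs (f (\<lambda>j. g j (\<lambda>i. xs!i)))"
    proof (intro exI allI impI)
      fix xs :: "nat list" assume len: "length xs = n"
      let ?ys = "map (\<lambda>j. g j (\<lambda>i. xs!i)) [0..<m]"
      have "list_all2 (\<lambda>r y. reval r xs y) (map R [0..<m]) ?ys"
        using R len by (auto simp: list_all2_conv_all_nth)
      moreover have "reval r ?ys (f (\<lambda>i. ?ys!i))" using r by simp
      moreover have "f (\<lambda>i. ?ys!i) = f (\<lambda>j. g j (\<lambda>i. xs!i))" by (rule fl) simp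
      ultimately show "reval (Comp r (map R [0..<m])) xs (f (\<lambda>j. g j (\<lambda>i. xs!i)))"
        using reval.comp by metis
    qed
  qed
qed

lemma rf_prim:
  assumes f: "rf n f" and g: "rf (Suc (Suc n)) g"
  shows "rf (Suc n) (\<lambda>e. rec_nat (f (\<lambda>i. e (Suc i)))
     (\<lambda>k y. g (\<lambda>i. if i = 0 then k else if i = Suc 0 then y else e (i - 1))) (e 0))"
proof -
  from f obtain rf0 where r1: "\<forall>xs. length xs = n \<longrightarrow> reval rf0 xs (f (\<lambda>i. xs!i))"
    unfolding rf_def by blast
  from g obtain rg where r2: "\<forall>xs. length xs = Suc (Suc n) \<longrightarrow> reval rg xs (g (\<lambda>i. xs!i))"
    unfolding rf_def by blast
  show ?thesis unfolding rf_def
  proof (intro conjI allI impI)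
    fix e e' :: "nat \<Rightarrow> nat" assume a: "\<forall>i<Suc n. e i = e' i"
    have 1: "f (\<lambda>i. e (Suc i)) = f (\<lambda>i. e' (Suc i))" by (rule rf_local[OF f]) (use a in auto)
    have 2: "(\<lambda>k y. g (\<lambda>i. if i = 0 then k else if i = Suc 0 then y else e (i - 1))) =
          (\<lambda>k y. g (\<lambda>i. if i = 0 then k else if i = Suc 0 then y else e' (i - 1)))"
      by (intro ext rf_local[OF g]) (use a in auto)
    show "rec_nat (f (\<lambda>i. e (Suc i))) (\<lambda>k y. g (\<lambda>i. if i = 0 then k else if i = Suc 0 then y else e (i - 1))) (e 0) =
          rec_nat (f (\<lambda>i. e' (Suc i))) (\<lambda>k y. g (\<lambda>i. if i = 0 then k else if i = Suc 0 then y else e' (i - 1))) (e' 0)"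
      using 1 2 a by simp
  next
    show "\<exists>r. \<forall>xs. length xs = Suc n \<longrightarrow> reval r xs (rec_nat (f (\<lambda>i. (\<lambda>i. xs!i) (Suc i)))
     (\<lambda>k y. g (\<lambda>i. if i = 0 then k else if i = Suc 0 then y else (\<lambda>i. xs!i) (i - 1))) ((\<lambda>i. xs!i) 0))"
    proof (intro exI allI impI)
      fix xs :: "nat list" assume len: "length xs = Suc n"
      then obtain x ys where xs: "xs = x # ys" and ly: "length ys = n" by (cases xs) auto
      have "reval (PrimRec rf0 rg) (k # ys) (rec_nat (f (\<lambda>i. ys!i))
         (\<lambda>k y. g (\<lambda>i. if i = 0 then k else if i = Suc 0 then y else (x#ys)!(i - 1))) k)" for k
      proof (induction k)
        case 0
        then show ?case using r1 ly by (simp add: reval.prim0)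
      next
        case (Suc k)
        let ?y = "rec_nat (f (\<lambda>i. ys!i))
         (\<lambda>k y. g (\<lambda>i. if i = 0 then k else if i = Suc 0 then y else (x#ys)!(i - 1))) k"
        have "reval rg (k # ?y # ys) (g (\<lambda>i. (k # ?y # ys)!i))" using r2 ly by simp
        moreover have "g (\<lambda>i. (k # ?y # ys)!i) =
            g (\<lambda>i. if i = 0 then k else if i = Suc 0 then ?y else (x#ys)!(i - 1))"
          by (rule rf_local[OF g]) (auto simp: nth_Cons split: nat.split)
        ultimately show ?case using Suc reval.primS by fastforce
      qed
      then show "reval (PrimRec rf0 rg) xs (rec_nat (f (\<lambda>i. (\<lambda>i. xs!i) (Suc i)))
     (\<lambda>k y. g (\<lambda>i. if i = 0 then k else if i = Suc 0 then y else (\<lambda>i. xs!i) (i - 1))) ((\<lambda>i. xs!i) 0))"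
        unfolding xs by simp
    qed
  qed
qed

lemma rf_const [intro]: "rf n (\<lambda>e. c)"
proof (induction c)
  case 0
  have "reval Zero xs 0" for xs by (rule reval.zero)
  then show ?case unfolding rf_def by blast
next
  case (Suc c)
  then obtain r where r: "\<forall>xs. length xs = n \<longrightarrow> reval r xs c" unfolding rf_def by auto
  have "reval (Comp Succ [r]) xs (Suc c)" if "length xs = n" for xs
    using r that reval.comp[of xs "[r]" "[c]" Succ "Suc c"] reval.succ[of c "[]"] by auto
  then show ?case unfolding rf_def by blast
qed

lemma rf_proj [intro]: "i < n \<Longrightarrow> rf n (\<lambda>e. e i)"
  unfolding rf_def using reval.proj by auto

lemma rf_lift1: "rf 1 (\<lambda>e. F (e 0)) \<Longrightarrow> rf n a \<Longrightarrow> rf n (\<lambda>e. F (a e))"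
  using rf_comp[of 1 "\<lambda>e. F (e 0)" n "\<lambda>j. a"] by simp

lemma rf_lift2: "rf 2 (\<lambda>e. F (e 0) (e 1)) \<Longrightarrow> rf n a \<Longrightarrow> rf n b \<Longrightarrow> rf n (\<lambda>e. F (a e) (b e))"
  using rf_comp[of 2 "\<lambda>e. F (e 0) (e 1)" n "\<lambda>j. if j = 0 then a else b"] by simp

lemma rf_lift3: "rf 3 (\<lambda>e. F (e 0) (e 1) (e 2)) \<Longrightarrow> rf n a \<Longrightarrow> rf n b \<Longrightarrow> rf n c \<Longrightarrow>
   rf n (\<lambda>e. F (a e) (b e) (c e))"
  using rf_comp[of 3 "\<lambda>e. F (e 0) (e 1) (e 2)" n "\<lambda>j. if j = 0 then a else if j = 1 then b else c"]
  by (simp add: numeral_3_eq_3 less_Suc_eq)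

lemma rf_Suc_base: "rf 1 (\<lambda>e. Suc (e 0))"
proof -
  have "reval Succ xs (Suc (xs!0))" if "length xs = 1" for xs
    using that reval.succ by (cases xs) auto
  then show ?thesis unfolding rf_def by auto
qed

lemma rf_Suc [intro]: "rf n a \<Longrightarrow> rf n (\<lambda>e. Suc (a e))"
  using rf_lift1[OF rf_Suc_base] .

lemma aux_add: "rec_nat b (\<lambda>k y. Suc y) a = a + b" by (induct a) auto

lemma rf_add_base: "rf 2 (\<lambda>e. e 0 + e 1)"
proof -
  have "rf (Suc 0) (\<lambda>e. e 0)" "rf (Suc (Suc (Suc 0))) (\<lambda>e. Suc (e 1))" by (intro rf_Suc rf_proj; simp)+
  from rf_prim[OF this] show ?thesis unfolding numeral_2_eq_2
    by (rule rf_cong) (simp add: aux_add)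
qed

named_theorems rfI
declare rf_const[rfI] rf_proj[rfI] rf_Suc[rfI]

lemma rf_add [rfI]: "rf n a \<Longrightarrow> rf n b \<Longrightarrow> rf n (\<lambda>e. a e + b e)"
  using rf_lift2[OF rf_add_base] .

lemma aux_pred: "rec_nat 0 (\<lambda>k y. k) a = a - 1" by (cases a) auto

lemma rf_pred_base: "rf 1 (\<lambda>e. e 0 - 1)"
proof -
  have "rf 0 (\<lambda>e. 0)" "rf (Suc (Suc 0)) (\<lambda>e. e 0)" by (intro rfI; simp)+
  from rf_prim[OF this] show ?thesis unfolding One_nat_def
    by (rule rf_cong) (simp add: aux_pred)
qed

lemma rf_pred [rfI]: "rf n a \<Longrightarrow> rf n (\<lambda>e. a e - 1)"
  using rf_lift1[OF rf_pred_base] .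

lemma aux_sub: "rec_nat b (\<lambda>k y. y - Suc 0) a = b - a" by (induct a) auto

lemma rf_sub_base: "rf 2 (\<lambda>e. e 0 - e 1)"
proof -
  have "rf (Suc 0) (\<lambda>e. e 0)" "rf (Suc (Suc (Suc 0))) (\<lambda>e. e 1 - 1)" by (intro rf_pred rf_proj; simp)+
  from rf_prim[OF this] have "rf 2 (\<lambda>e. e 1 - e 0)" unfolding numeral_2_eq_2
    by (rule rf_cong) (simp add: aux_sub)
  from rf_lift2[OF this rf_proj[of 1 2] rf_proj[of 0 2]] show ?thesis by simp
qed

lemma rf_sub [rfI]: "rf n a \<Longrightarrow> rf n b \<Longrightarrow> rf n (\<lambda>e. a e - b e)"
  using rf_lift2[OF rf_sub_base] .

lemma aux_mult: "rec_nat 0 (\<lambda>k y. y + b) a = a * b" by (induct a) auto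

lemma rf_mult_base: "rf 2 (\<lambda>e. e 0 * e 1)"
proof -
  have "rf (Suc 0) (\<lambda>e. 0)" "rf (Suc (Suc (Suc 0))) (\<lambda>e. e 1 + e 2)" by (intro rf_add rf_proj rf_const; simp)+
  from rf_prim[OF this] show ?thesis unfolding numeral_2_eq_2
    by (rule rf_cong) (simp add: aux_mult)
qed

lemma rf_mult [rfI]: "rf n a \<Longrightarrow> rf n b \<Longrightarrow> rf n (\<lambda>e. a e * b e)"
  using rf_lift2[OF rf_mult_base] .

lemma aux_pow: "rec_nat (Suc 0) (\<lambda>k y. y * b) a = b ^ a" by (induct a) (auto simp: mult.commute)

lemma rf_pow_base: "rf 2 (\<lambda>e. e 1 ^ e 0)"
proof -
  have "rf (Suc 0) (\<lambda>e. 1)" "rf (Suc (Suc (Suc 0))) (\<lambda>e. e 1 * e 2)" by (intro rf_mult rf_proj rf_const; simp)+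
  from rf_prim[OF this] show ?thesis unfolding numeral_2_eq_2
    by (rule rf_cong) (simp add: aux_pow)
qed

lemma rf_pow [rfI]: "rf n a \<Longrightarrow> rf n b \<Longrightarrow> rf n (\<lambda>e. a e ^ b e)"
  using rf_lift2[OF rf_pow_base, of n b a] by simp

lemma aux_iter: "rec_nat b (\<lambda>k y. f y) a = (f ^^ a) b" by (induct a) auto

lemma rf_iter [rfI]:
  assumes "rf (Suc 0) (\<lambda>e. f (e 0))" "rf n a" "rf n x"
  shows "rf n (\<lambda>e. (f ^^ a e) (x e))"
proof -
  have "rf (Suc (Suc (Suc 0))) (\<lambda>e. f (e 1))"
    using rf_lift1[of f "Suc (Suc (Suc 0))" "\<lambda>e. e 1"] assms(1) rf_proj by simp
  have "rf (Suc 0) (\<lambda>e. e 0)" by (rule rf_proj) simp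
  from rf_prim[OF this \<open>rf (Suc (Suc (Suc 0))) (\<lambda>e. f (e 1))\<close>] have "rf 2 (\<lambda>e. (f ^^ e 0) (e 1))" unfolding numeral_2_eq_2
    by (rule rf_cong) (simp add: aux_iter One_nat_def)
  from rf_lift2[OF this assms(2,3)] show ?thesis .
qed

definition rp :: "nat \<Rightarrow> ((nat \<Rightarrow> nat) \<Rightarrow> bool) \<Rightarrow> bool" where
  "rp n P \<longleftrightarrow> rf n (\<lambda>e. if P e then 1 else 0)"

lemma rp_cong: "rp n P \<Longrightarrow> (\<And>e. P e = Q e) \<Longrightarrow> rp n Q"
  unfolding rp_def by (rule rf_cong) auto

lemma rp_eq [rfI]: "rf n a \<Longrightarrow> rf n b \<Longrightarrow> rp n (\<lambda>e. a e = b e)"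
  unfolding rp_def
  apply (rule rf_cong[where f="\<lambda>e. 1 - ((a e - b e) + (b e - a e))"])
   apply (intro rfI; assumption)
  apply auto
  done

lemma rp_le [rfI]: "rf n a \<Longrightarrow> rf n b \<Longrightarrow> rp n (\<lambda>e. a e \<le> b e)"
  unfolding rp_def
  apply (rule rf_cong[where f="\<lambda>e. 1 - (a e - b e)"])
   apply (intro rfI; assumption)
  apply auto
  done

lemma rp_less [rfI]: "rf n a \<Longrightarrow> rf n b \<Longrightarrow> rp n (\<lambda>e. a e < b e)"
  unfolding rp_def
  apply (rule rf_cong[where f="\<lambda>e. 1 - (Suc (a e) - b e)"])
   apply (intro rfI; assumption)
  apply auto
  done

lemma rp_const [rfI]: "rp n (\<lambda>e. c)"
  unfolding rp_def by (cases c) (simp_all add: rf_const)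

lemma rp_not [rfI]: "rp n P \<Longrightarrow> rp n (\<lambda>e. \<not> P e)"
  unfolding rp_def
  apply (rule rf_cong[where f="\<lambda>e. 1 - (if P e then 1 else 0)"])
   apply (intro rfI; assumption)
  apply auto
  done

lemma rp_conj [rfI]: "rp n P \<Longrightarrow> rp n Q \<Longrightarrow> rp n (\<lambda>e. P e \<and> Q e)"
  unfolding rp_def
  apply (rule rf_cong[where f="\<lambda>e. (if P e then 1 else 0) * (if Q e then 1 else 0)"])
   apply (intro rfI; assumption)
  apply auto
  done

lemma rp_disj [rfI]: "rp n P \<Longrightarrow> rp n Q \<Longrightarrow> rp n (\<lambda>e. P e \<or> Q e)"
proof -
  assume p: "rp n P" and q: "rp n Q"
  have "rp n (\<lambda>e. \<not> (\<not> P e \<and> \<not> Q e))" by (intro rfI p q)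
  then show ?thesis by simp
qed

lemma rp_imp [rfI]: "rp n P \<Longrightarrow> rp n Q \<Longrightarrow> rp n (\<lambda>e. P e \<longrightarrow> Q e)"
proof -
  assume p: "rp n P" and q: "rp n Q"
  have "rp n (\<lambda>e. \<not> P e \<or> Q e)" by (intro rfI p q)
  then show ?thesis by simp
qed

lemma rp_iff [rfI]: "rp n P \<Longrightarrow> rp n Q \<Longrightarrow> rp n (\<lambda>e. P e \<longleftrightarrow> Q e)"
proof -
  assume p: "rp n P" and q: "rp n Q"
  have "rp n (\<lambda>e. (P e \<longrightarrow> Q e) \<and> (Q e \<longrightarrow> P e))" by (intro rfI p q)
  then show ?thesis by (simp add: iff_conv_conj_imp)
qed

lemma rf_if [rfI]: "rp n P \<Longrightarrow> rf n a \<Longrightarrow> rf n b \<Longrightarrow> rf n (\<lambda>e. if P e then a e else b e)"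
  unfolding rp_def
  apply (rule rf_cong[where f="\<lambda>e. (if P e then 1 else 0) * a e + (1 - (if P e then 1 else 0)) * b e"])
   apply (intro rfI; assumption)
  apply auto
  done

lemma rf_subst0:
  assumes "rf (Suc n) h" "rf n B"
  shows "rf n (\<lambda>e. h (\<lambda>i. if i = 0 then B e else e (i - 1)))"
proof -
  have "rf n (\<lambda>e. h (\<lambda>j. (\<lambda>j e. if j = 0 then B e else e (j - 1)) j e))"
    by (rule rf_comp[OF assms(1)]) (case_tac "j = 0"; simp add: assms(2) rf_proj)
  then show ?thesis by simp
qed

lemma aux_sum: "rec_nat 0 (\<lambda>k y. y + h k) a = (\<Sum>i<a. h i)" by (induct a) auto

lemma rf_bsum [rfI]:
  assumes F: "rf (Suc n) (\<lambda>e. F (e 0) (\<lambda>i. e (Suc i)))" and B: "rf n B"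
  shows "rf n (\<lambda>e. \<Sum>i<B e. F i e)"
proof -
  have g: "rf (Suc (Suc n)) (\<lambda>e'. e' 1 + F (e' 0) (\<lambda>i. e' (Suc (Suc i))))"
  proof -
    have "rf (Suc (Suc n)) (\<lambda>e'. (\<lambda>e. F (e 0) (\<lambda>i. e (Suc i))) (\<lambda>j. (\<lambda>j. if j = 0 then (\<lambda>e'. e' 0) else (\<lambda>e'. e' (Suc j))) j e'))"
      by (rule rf_comp[OF F]) (auto intro: rf_proj)
    then have "rf (Suc (Suc n)) (\<lambda>e'. F (e' 0) (\<lambda>i. e' (Suc (Suc i))))" by simp
    then show ?thesis by (intro rfI; (assumption | simp))
  qed
  have "rf (Suc n) (\<lambda>e. \<Sum>i<e 0. F i (\<lambda>j. e (Suc j)))"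
    using rf_prim[OF rf_const[of n 0] g] by (rule rf_cong) (simp add: aux_sum)
  from rf_subst0[OF this B] show ?thesis by simp
qed

lemma rp_ball [rfI]:
  assumes "rp (Suc n) (\<lambda>e. P (e 0) (\<lambda>i. e (Suc i)))" "rf n B"
  shows "rp n (\<lambda>e. \<forall>i<B e. P i e)"
proof -
  have "rf (Suc n) (\<lambda>e. 1 - (if P (e 0) (\<lambda>i. e (Suc i)) then 1 else 0))"
    by (intro rfI assms(1))
  then have h: "rf n (\<lambda>e. \<Sum>i<B e. 1 - (if P i e then 1 else 0))" using assms(2) by (rule rf_bsum)
  have "rp n (\<lambda>e. (\<Sum>i<B e. 1 - (if P i e then 1 else 0)) = (0::nat))" by (rule rp_eq[OF h rf_const])
  then show ?thesis by (rule rp_cong) (auto split: if_splits)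
qed

lemma rp_bex [rfI]:
  assumes "rp (Suc n) (\<lambda>e. P (e 0) (\<lambda>i. e (Suc i)))" "rf n B"
  shows "rp n (\<lambda>e. \<exists>i<B e. P i e)"
proof -
  have "rp (Suc n) (\<lambda>e. \<not> P (e 0) (\<lambda>i. e (Suc i)))" by (intro rfI assms(1))
  then have h: "rp n (\<lambda>e. \<forall>i<B e. \<not> P i e)" using assms(2) by (rule rp_ball)
  have "rp n (\<lambda>e. \<not> (\<forall>i<B e. \<not> P i e))" by (rule rp_not[OF h])
  then show ?thesis by simp
qed

lemma rf_comp_rp:
  assumes "rp m P" "\<And>j. j < m \<Longrightarrow> rf n (g j)"
  shows "rp n (\<lambda>e. P (\<lambda>j. g j e))"
  using rf_comp[of m "\<lambda>e. if P e then 1 else 0" n g] assms unfolding rp_def by simp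

lemma rf_iterp [rfI]:
  assumes F: "rf (Suc n) (\<lambda>e. F (e 0) (\<lambda>i. e (Suc i)))" and a: "rf n a" and x: "rf n x"
  shows "rf n (\<lambda>e. ((\<lambda>z. F z e) ^^ a e) (x e))"
proof -
  have g: "rf (Suc (Suc n)) (\<lambda>e'. F (e' 1) (\<lambda>i. e' (Suc (Suc i))))"
  proof -
    have "rf (Suc (Suc n)) (\<lambda>e'. (\<lambda>e. F (e 0) (\<lambda>i. e (Suc i))) (\<lambda>j. (\<lambda>j. if j = 0 then (\<lambda>e'. e' 1) else (\<lambda>e'. e' (Suc j))) j e'))"
      by (rule rf_comp[OF F]) (auto intro: rf_proj)
    then show ?thesis by simp
  qed
  have x': "rf n (\<lambda>e. x e)" using x by simp
  have "rf (Suc n) (\<lambda>e. ((\<lambda>z. F z (\<lambda>j. e (Suc j))) ^^ e 0) (x (\<lambda>j. e (Suc j))))"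
    using rf_prim[OF x' g] by (rule rf_cong) (simp add: aux_iter)
  from rf_subst0[OF this a] show ?thesis by simp
qed

lemma two_triangle: "2 * triangle n = n * Suc n"
  by (induct n) auto

lemma prod_encode_eq_iff: "prod_encode (x, y) = m \<longleftrightarrow> 2 * m = (x + y) * Suc (x + y) + 2 * x"
proof -
  have "prod_encode (x, y) = triangle (x + y) + x" by (simp add: prod_encode_def)
  then show ?thesis using two_triangle[of "x + y"] by auto
qed

lemma pd_bounds: "fst (prod_decode m) \<le> m" "snd (prod_decode m) \<le> m"
proof -
  obtain a b where ab: "prod_decode m = (a, b)" by (cases "prod_decode m")
  then have "prod_encode (a, b) = m" by (metis prod_decode_inverse)
  then have "a \<le> m" "b \<le> m" using le_prod_encode_1 le_prod_encode_2 by metis+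
  then show "fst (prod_decode m) \<le> m" "snd (prod_decode m) \<le> m"
    using ab by auto
qed

lemma prod_encode_eq_decode: "prod_encode (x, y) = m \<longleftrightarrow> x = fst (prod_decode m) \<and> y = snd (prod_decode m)"
  by (metis prod.collapse prod_decode_inverse prod_encode_inverse prod.inject)

lemma pd_cond: "(2 * m = (x + y) * Suc (x + y) + 2 * x) \<longleftrightarrow> (y = snd (prod_decode m) \<and> x = fst (prod_decode m))"
  using prod_encode_eq_iff[of x y m] prod_encode_eq_decode[of x y m] by auto

lemma if_conj_split: "(if y = q \<and> x = p then v else 0) = (if y = q then (if x = p then v else 0) else (0::nat))"
  by auto

lemma pd1_sum: "fst (prod_decode m) = (\<Sum>x<Suc m. \<Sum>y<Suc m. if 2 * m = (x + y) * Suc (x + y) + 2 * x then x else 0)"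
  unfolding pd_cond if_conj_split using pd_bounds[of m] by (simp add: sum.delta)

lemma pd2_sum: "snd (prod_decode m) = (\<Sum>x<Suc m. \<Sum>y<Suc m. if 2 * m = (x + y) * Suc (x + y) + 2 * x then y else 0)"
  unfolding pd_cond if_conj_split using pd_bounds[of m] by (simp add: sum.delta)

lemma rf_pd1_base: "rf 1 (\<lambda>e. fst (prod_decode (e 0)))"
proof -
  have "rf 1 (\<lambda>e. \<Sum>x<Suc (e 0). \<Sum>y<Suc (e 0). if 2 * e 0 = (x + y) * Suc (x + y) + 2 * x then x else 0)"
    by (intro rfI; simp)
  then show ?thesis by (rule rf_cong) (simp add: pd1_sum)
qed

lemma rf_pd2_base: "rf 1 (\<lambda>e. snd (prod_decode (e 0)))"
proof -
  have "rf 1 (\<lambda>e. \<Sum>x<Suc (e 0). \<Sum>y<Suc (e 0). if 2 * e 0 = (x + y) * Suc (x + y) + 2 * x then y else 0)"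
    by (intro rfI; simp)
  then show ?thesis by (rule rf_cong) (simp add: pd2_sum)
qed

lemma rf_pd1 [rfI]: "rf n a \<Longrightarrow> rf n (\<lambda>e. fst (prod_decode (a e)))"
  using rf_lift1[OF rf_pd1_base] .

lemma rf_pd2 [rfI]: "rf n a \<Longrightarrow> rf n (\<lambda>e. snd (prod_decode (a e)))"
  using rf_lift1[OF rf_pd2_base] .

lemma triangle_sum: "triangle n = (\<Sum>i<Suc n. i)"
  by (induct n) auto

lemma rf_pe_base: "rf 2 (\<lambda>e. prod_encode (e 0, e 1))"
proof -
  have "rf 2 (\<lambda>e. (\<Sum>i<Suc (e 0 + e 1). i) + e 0)"
    by (intro rfI; simp)
  then show ?thesis by (rule rf_cong) (simp add: prod_encode_def triangle_sum)
qed

lemma rf_pe [rfI]: "rf n a \<Longrightarrow> rf n b \<Longrightarrow> rf n (\<lambda>e. prod_encode (a e, b e))"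
  using rf_lift2[OF rf_pe_base] .

lemma rp_fin [rfI]:
  assumes "finite S" "rf n a"
  shows "rp n (\<lambda>e. a e \<in> S)"
  using assms(1)
proof (induction S rule: finite_induct)
  case empty
  show ?case using rp_const[of n False] by simp
next
  case (insert x F)
  have "rp n (\<lambda>e. a e = x \<or> a e \<in> F)" by (intro rfI insert.IH assms(2))
  then show ?case by simp
qed

definition ltl :: "nat \<Rightarrow> nat" where "ltl m = snd (prod_decode (m - 1))"
definition lhd :: "nat \<Rightarrow> nat" where "lhd m = fst (prod_decode (m - 1))"
definition nthc :: "nat \<Rightarrow> nat \<Rightarrow> nat" where "nthc m j = lhd ((ltl ^^ j) m)"
definition lenc :: "nat \<Rightarrow> nat" where "lenc m = (\<Sum>j<m. if (ltl ^^ j) m = 0 then 0 else 1)"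
definition memc :: "nat \<Rightarrow> nat \<Rightarrow> bool" where "memc x m \<longleftrightarrow> (\<exists>j<lenc m. nthc m j = x)"

lemma prod_decode_0: "prod_decode 0 = (0, 0)"
  by (simp add: prod_decode_def prod_decode_aux.simps)

lemma ld_nonzero: "m \<noteq> 0 \<Longrightarrow> list_decode m = lhd m # list_decode (ltl m)"
  by (cases m) (auto simp: lhd_def ltl_def split: prod.split)

lemma ld_zero_iff: "list_decode m = [] \<longleftrightarrow> m = 0"
  by (cases m) (auto split: prod.split)

lemma ld_ltl: "list_decode (ltl m) = tl (list_decode m)"
proof (cases "m = 0")
  case True
  then show ?thesis by (simp add: ltl_def prod_decode_0)
next
  case False
  then show ?thesis using ld_nonzero[OF False] by simp
qed

lemma ld_iter: "list_decode ((ltl ^^ j) m) = drop j (list_decode m)"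
  by (induct j) (auto simp: ld_ltl drop_Suc tl_drop)

lemma nthc_correct: "j < length (list_decode m) \<Longrightarrow> nthc m j = list_decode m ! j"
proof -
  assume j: "j < length (list_decode m)"
  let ?m' = "(ltl ^^ j) m"
  have d: "list_decode ?m' = drop j (list_decode m)" by (rule ld_iter)
  then have "?m' \<noteq> 0" using j by (metis ld_zero_iff drop_eq_Nil not_le)
  then have "list_decode ?m' = lhd ?m' # list_decode (ltl ?m')" by (rule ld_nonzero)
  then show ?thesis using d j unfolding nthc_def by (metis hd_drop_conv_nth list.sel(1))
qed

lemma length_le_encode: "length xs \<le> list_encode xs"
proof (induct xs)
  case (Cons x xs)
  then show ?case using le_prod_encode_2[of "list_encode xs" x] by simp
qed simp

lemma elem_le_encode: "x \<in> set xs \<Longrightarrow> x \<le> list_encode xs"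
proof (induct xs)
  case (Cons y xs)
  then show ?case using le_prod_encode_1[of y "list_encode xs"] le_prod_encode_2[of "list_encode xs" y]
    by auto
qed simp

lemma length_ld_le: "length (list_decode m) \<le> m"
  using length_le_encode[of "list_decode m"] by simp

lemma elem_ld_le: "x \<in> set (list_decode m) \<Longrightarrow> x \<le> m"
  using elem_le_encode[of x "list_decode m"] by simp

lemma lenc_correct: "lenc m = length (list_decode m)"
proof -
  have "\<And>j. ((ltl ^^ j) m = 0) \<longleftrightarrow> \<not> j < length (list_decode m)"
    by (metis ld_iter ld_zero_iff drop_eq_Nil not_le)
  then have "lenc m = (\<Sum>j<m. if j < length (list_decode m) then 1 else 0)"
    unfolding lenc_def by (intro sum.cong) auto
  also have "\<dots> = card {j. j < m \<and> j < length (list_decode m)}"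
    by (simp add: sum.If_cases Int_def)
  also have "{j. j < m \<and> j < length (list_decode m)} = {..<length (list_decode m)}"
    using length_ld_le[of m] by auto
  finally show ?thesis by simp
qed

lemma memc_correct: "memc x m \<longleftrightarrow> x \<in> set (list_decode m)"
  unfolding memc_def lenc_correct by (auto simp: nthc_correct in_set_conv_nth)

lemma rf_ltl [rfI]: "rf n a \<Longrightarrow> rf n (\<lambda>e. ltl (a e))"
  unfolding ltl_def by (intro rfI)

lemma rf_nthc [rfI]: "rf n a \<Longrightarrow> rf n b \<Longrightarrow> rf n (\<lambda>e. nthc (a e) (b e))"
  unfolding nthc_def lhd_def by (intro rfI; simp?)

lemma rf_lenc_base: "rf 1 (\<lambda>e. lenc (e 0))"
  unfolding lenc_def by (intro rfI; simp)

lemma rf_lenc [rfI]: "rf n a \<Longrightarrow> rf n (\<lambda>e. lenc (a e))"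
  using rf_lift1[OF rf_lenc_base] .

lemma rp_lift2: "rp 2 (\<lambda>e. P (e 0) (e 1)) \<Longrightarrow> rf n a \<Longrightarrow> rf n b \<Longrightarrow> rp n (\<lambda>e. P (a e) (b e))"
  using rf_lift2[of "\<lambda>x y. if P x y then 1 else 0" n a b] unfolding rp_def by simp

lemma rp_memc_base: "rp 2 (\<lambda>e. memc (e 0) (e 1))"
  unfolding memc_def by (intro rfI; simp)

lemma rp_memc [rfI]: "rf n a \<Longrightarrow> rf n b \<Longrightarrow> rp n (\<lambda>e. memc (a e) (b e))"
  using rp_lift2[OF rp_memc_base] .

lemma rf_min [rfI]: "rf n a \<Longrightarrow> rf n b \<Longrightarrow> rf n (\<lambda>e. min (a e) (b e))"
  unfolding min_def by (intro rfI)

lemma rf_max [rfI]: "rf n a \<Longrightarrow> rf n b \<Longrightarrow> rf n (\<lambda>e. max (a e) (b e))"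
  unfolding max_def by (intro rfI)

definition cAc :: "nat \<Rightarrow> nat" where "cAc c = fst (prod_decode c)"
definition cIc :: "nat \<Rightarrow> nat" where "cIc c = fst (prod_decode (snd (prod_decode c)))"
definition cFc :: "nat \<Rightarrow> nat" where "cFc c = fst (prod_decode (snd (prod_decode (snd (prod_decode c)))))"
definition cTc :: "nat \<Rightarrow> nat" where "cTc c = snd (prod_decode (snd (prod_decode (snd (prod_decode c)))))"

lemma dec_dsa_parts:
  "alph (dec_dsa c) = list_decode (cAc c)"
  "init (dec_dsa c) = cIc c"
  "final (dec_dsa c) = list_decode (cFc c)"
  "tab (dec_dsa c) = map dec_entry (list_decode (cTc c))"
  by (simp_all add: dec_dsa_def cAc_def cIc_def cFc_def cTc_def split: prod.split)

definition ent1 :: "nat \<Rightarrow> nat" where "ent1 n = fst (prod_decode n)"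
definition ent2 :: "nat \<Rightarrow> nat" where "ent2 n = fst (prod_decode (snd (prod_decode n)))"
definition ent3 :: "nat \<Rightarrow> nat" where "ent3 n = fst (prod_decode (snd (prod_decode (snd (prod_decode n)))))"
definition ent4 :: "nat \<Rightarrow> nat" where "ent4 n = snd (prod_decode (snd (prod_decode (snd (prod_decode n)))))"

lemma dec_entry_eq: "dec_entry n = ((ent1 n, ent2 n, ent3 n), ent4 n)"
  by (simp add: dec_entry_def ent1_def ent2_def ent3_def ent4_def split: prod.split)

lemma map_of_Some_iff_nth:
  "map_of xs k = Some v \<longleftrightarrow> (\<exists>j<length xs. xs!j = (k,v) \<and> (\<forall>j'<j. fst (xs!j') \<noteq> k))"
proof (induct xs)
  case Nil
  then show ?case by simp
next
  case (Cons x xs)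
  show ?case
  proof (cases "fst x = k")
    case True
    then show ?thesis
      by (cases x) (auto simp: nth_Cons' intro!: exI[of _ 0] split: if_splits)
  next
    case False
    have "map_of (x # xs) k = map_of xs k" using False by (cases x) auto
    also have "\<dots> = Some v \<longleftrightarrow> (\<exists>j<length xs. xs!j = (k,v) \<and> (\<forall>j'<j. fst (xs!j') \<noteq> k))" by (rule Cons)
    also have "\<dots> \<longleftrightarrow> (\<exists>j<length (x#xs). (x#xs)!j = (k,v) \<and> (\<forall>j'<j. fst ((x#xs)!j') \<noteq> k))"
    proof
      assume "\<exists>j<length xs. xs!j = (k,v) \<and> (\<forall>j'<j. fst (xs!j') \<noteq> k)"
      then obtain j where j: "j<length xs" "xs!j = (k,v)" "\<forall>j'<j. fst (xs!j') \<noteq> k" by blast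
      show "\<exists>j<length (x#xs). (x#xs)!j = (k,v) \<and> (\<forall>j'<j. fst ((x#xs)!j') \<noteq> k)"
        using j False by (intro exI[of _ "Suc j"]) (auto simp: nth_Cons' less_Suc_eq_0_disj)
    next
      assume "\<exists>j<length (x#xs). (x#xs)!j = (k,v) \<and> (\<forall>j'<j. fst ((x#xs)!j') \<noteq> k)"
      then obtain j where j: "j<length (x#xs)" "(x#xs)!j = (k,v)" "\<forall>j'<j. fst ((x#xs)!j') \<noteq> k" by blast
      then obtain j0 where "j = Suc j0" using False by (cases j) auto
      then show "\<exists>j<length xs. xs!j = (k,v) \<and> (\<forall>j'<j. fst (xs!j') \<noteq> k)"
        using j by (intro exI[of _ j0]) auto
    qed
    finally show ?thesis .
  qed
qed

definition foundc :: "nat \<Rightarrow> nat \<Rightarrow> nat \<Rightarrow> nat \<Rightarrow> nat \<Rightarrow> bool" where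
  "foundc c p s q i \<longleftrightarrow> (\<exists>j<lenc (cTc c).
     ent1 (nthc (cTc c) j) = p \<and> ent2 (nthc (cTc c) j) = s \<and> ent3 (nthc (cTc c) j) = q \<and>
     ent4 (nthc (cTc c) j) = i \<and>
     (\<forall>j'<j. \<not> (ent1 (nthc (cTc c) j') = p \<and> ent2 (nthc (cTc c) j') = s \<and> ent3 (nthc (cTc c) j') = q)))"

lemma foundc_correct: "foundc c p s q i \<longleftrightarrow> map_of (tab (dec_dsa c)) (p, s, q) = Some i"
proof -
  let ?T = "cTc c"
  have "map_of (tab (dec_dsa c)) (p, s, q) = Some i \<longleftrightarrow>
    (\<exists>j<length (list_decode ?T). dec_entry (list_decode ?T ! j) = ((p,s,q),i) \<and>
       (\<forall>j'<j. fst (dec_entry (list_decode ?T ! j')) \<noteq> (p,s,q)))"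
    unfolding dec_dsa_parts map_of_Some_iff_nth by (auto simp: nth_map)
  also have "\<dots> \<longleftrightarrow> foundc c p s q i"
    unfolding foundc_def lenc_correct dec_entry_eq
    apply (intro iffI; elim exE conjE; rule_tac x=j in exI)
     apply (auto simp: nthc_correct)
    done
  finally show ?thesis by simp
qed

lemma rp_found_base: "rp 5 (\<lambda>e. foundc (e 0) (e 1) (e 2) (e 3) (e 4))"
  unfolding foundc_def ent1_def ent2_def ent3_def ent4_def cTc_def
  by (intro rfI; simp)

lemma rp_found [rfI]:
  assumes "rf n c" "rf n p" "rf n s" "rf n q" "rf n i"
  shows "rp n (\<lambda>e. foundc (c e) (p e) (s e) (q e) (i e))"
proof -
  have "rp n (\<lambda>e. (\<lambda>e. foundc (e 0) (e 1) (e 2) (e 3) (e 4))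
     (\<lambda>j. (\<lambda>j::nat. if j = 0 then c else if j = 1 then p else if j = 2 then s else if j = 3 then q else i) j e))"
    by (rule rf_comp_rp[OF rp_found_base]) (use assms in \<open>auto simp: eval_nat_numeral less_Suc_eq\<close>)
  then show ?thesis by simp
qed

definition lb :: "nat \<Rightarrow> nat \<Rightarrow> nat" where "lb L M = list_encode (replicate L M)"

lemma lb_iter: "lb L M = ((\<lambda>z. Suc (prod_encode (M, z))) ^^ L) 0"
  unfolding lb_def by (induct L) auto

lemma rf_lb_base: "rf 2 (\<lambda>e. lb (e 0) (e 1))"
  unfolding lb_iter by (intro rfI; simp)

lemma rf_lb [rfI]: "rf n a \<Longrightarrow> rf n b \<Longrightarrow> rf n (\<lambda>e. lb (a e) (b e))"
  using rf_lift2[OF rf_lb_base] .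

lemma rf_cAc [rfI]: "rf n a \<Longrightarrow> rf n (\<lambda>e. cAc (a e))" unfolding cAc_def by (intro rfI)
lemma rf_cIc [rfI]: "rf n a \<Longrightarrow> rf n (\<lambda>e. cIc (a e))" unfolding cIc_def by (intro rfI)
lemma rf_cFc [rfI]: "rf n a \<Longrightarrow> rf n (\<lambda>e. cFc (a e))" unfolding cFc_def by (intro rfI)
lemma rf_cTc [rfI]: "rf n a \<Longrightarrow> rf n (\<lambda>e. cTc (a e))" unfolding cTc_def by (intro rfI)

definition MMc :: "nat \<Rightarrow> nat" where "MMc c = max (cIc c) (cTc c)"
definition KKc :: "nat \<Rightarrow> nat \<Rightarrow> nat" where "KKc cT c = 2 ^ (Suc (MMc c) * cT)"

definition Phic :: "nat \<Rightarrow> nat \<Rightarrow> nat set \<Rightarrow> bool \<Rightarrow> nat \<Rightarrow> nat \<Rightarrow> bool" where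
  "Phic k N Gs acc cT c \<longleftrightarrow>
    (\<forall>w<Suc (lb (KKc cT c) (cAc c)). (lenc w \<le> KKc cT c \<and> (\<forall>j<lenc w. memc (nthc w j) (cAc c))) \<longrightarrow>
      (\<exists>r<Suc (lb (Suc (lenc w)) (MMc c)). lenc r = Suc (lenc w) \<and> nthc r 0 = cIc c \<and>
         (\<forall>j<lenc w. \<exists>i<k. foundc c (nthc r j) (nthc w j) (nthc r (Suc j)) i) \<and>
         (acc \<longrightarrow> memc (nthc r (lenc w)) (cFc c)) \<and>
         (\<exists>s<Suc (Max Gs). s \<in> Gs \<and> lenc s = min (lenc w) N \<and>
            (\<forall>j<lenc s. foundc c (nthc r j) (nthc w j) (nthc r (Suc j)) (nthc s j)))))"

lemma rp_Phic: "finite Gs \<Longrightarrow> rp 1 (\<lambda>e. Phic k N Gs acc cT (e 0))"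
  unfolding Phic_def KKc_def MMc_def
  by (intro rfI; simp)

lemma decidable_from_rp: "rp 1 (\<lambda>e. P (e 0)) \<Longrightarrow> decidable_set {c. P c}"
proof -
  assume "rp 1 (\<lambda>e. P (e 0))"
  then obtain r where r: "\<forall>xs. length xs = 1 \<longrightarrow> reval r xs (if P (xs ! 0) then 1 else 0)"
    unfolding rp_def rf_def by blast
  have "reval r [n] (if n \<in> {c. P c} then 1 else 0)" for n using r[rule_format, of "[n]"] by simp
  then show ?thesis unfolding decidable_set_def by blast
qed

locale gctx =
  fixes lam t :: real and as :: "real list"
  assumes lam0: "0 < lam" and lam1: "lam < 1"
begin

definition C :: real where "C = sum_list (map abs as)"
definition V :: "(nat \<Rightarrow> real) \<Rightarrow> real" where "V s = suminf (\<lambda>i. s i * lam ^ i)"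

lemma C_nonneg: "0 \<le> C"
  unfolding C_def by (induct as) auto

lemma absC: "a \<in> set as \<Longrightarrow> \<bar>a\<bar> \<le> C"
  unfolding C_def
proof (induct as)
  case (Cons b bs)
  have "0 \<le> sum_list (map abs bs)" by (induct bs) auto
  then show ?case using Cons by auto
qed simp

lemma summ:
  assumes "\<And>i. \<bar>s i\<bar> \<le> B"
  shows "summable (\<lambda>i. s i * lam ^ i)"
proof (rule summable_comparison_test[where g="\<lambda>i. B * lam ^ i"])
  show "\<exists>N. \<forall>n\<ge>N. norm (s n * lam ^ n) \<le> B * lam ^ n"
    using assms lam0 by (auto simp: abs_mult intro!: mult_right_mono)
  show "summable (\<lambda>i. B * lam ^ i)"
    using lam0 lam1 by (intro summable_mult summable_geometric) auto
qed

lemma geo_tail: "(\<Sum>i. B * lam ^ (i + n)) = B * lam ^ n / (1 - lam)"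
proof -
  have "(\<lambda>i. B * lam ^ n * lam ^ i) sums (B * lam ^ n * (1 / (1 - lam)))"
    using lam0 lam1 by (intro sums_mult geometric_sums) auto
  then show ?thesis by (simp add: power_add mult_ac sums_iff)
qed

lemma tail_bound:
  assumes d0: "\<And>i. i < n \<Longrightarrow> d i = 0" and dB: "\<And>i. \<bar>d i\<bar> \<le> B"
  shows "\<bar>suminf (\<lambda>i. d i * lam ^ i)\<bar> \<le> B * lam ^ n / (1 - lam)"
proof -
  have s: "summable (\<lambda>i. d i * lam ^ i)" using summ dB by blast
  have "suminf (\<lambda>i. d i * lam ^ i) = (\<Sum>i. d (i + n) * lam ^ (i + n)) + (\<Sum>i<n. d i * lam ^ i)"
    using suminf_split_initial_segment[OF s, of n] by simp
  also have "(\<Sum>i<n. d i * lam ^ i) = 0" using d0 by simp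
  finally have eq: "suminf (\<lambda>i. d i * lam ^ i) = (\<Sum>i. d (i + n) * lam ^ (i + n))" by simp
  have s2: "summable (\<lambda>i. d (i + n) * lam ^ (i + n))"
    using s by (subst summable_iff_shift) simp
  have "summable (\<lambda>i. (B * lam ^ n) * lam ^ i)"
    using lam0 lam1 by (intro summable_mult summable_geometric) auto
  then have s3: "summable (\<lambda>i. B * lam ^ (i + n))" by (simp add: power_add mult_ac)
  have "(\<Sum>i. d (i + n) * lam ^ (i + n)) \<le> (\<Sum>i. B * lam ^ (i + n))"
    using dB lam0 by (intro suminf_le s2 s3) (auto intro!: mult_right_mono simp: abs_le_iff)
  moreover have "-(\<Sum>i. B * lam ^ (i + n)) \<le> (\<Sum>i. d (i + n) * lam ^ (i + n))"
  proof -
    have lo: "- (B * lam ^ (i + n)) \<le> d (i + n) * lam ^ (i + n)" for i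
    proof -
      have "-B \<le> d (i+n)" using dB[of "i+n"] by (simp add: abs_le_iff)
      then have "(-B) * lam^(i+n) \<le> d (i+n) * lam^(i+n)" by (rule mult_right_mono) (use lam0 in simp)
      then show ?thesis by simp
    qed
    have "(\<Sum>i. - (B * lam ^ (i + n))) \<le> (\<Sum>i. d (i + n) * lam ^ (i + n))"
      using s3 by (intro suminf_le s2 summable_minus lo)
    then show ?thesis using suminf_minus[OF s3] by simp
  qed
  ultimately show ?thesis unfolding eq geo_tail by linarith
qed

lemma V_diff:
  assumes "\<And>i. \<bar>s i\<bar> \<le> C" "\<And>i. \<bar>s' i\<bar> \<le> C" "\<And>i. i < n \<Longrightarrow> s i = s' i"
  shows "\<bar>V s - V s'\<bar> \<le> 2 * C * lam ^ n / (1 - lam)"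
proof -
  have "V s - V s' = suminf (\<lambda>i. (s i - s' i) * lam ^ i)"
    unfolding V_def using summ[of s C] summ[of s' C] assms
    by (subst suminf_diff) (auto simp: left_diff_distrib)
  also have "\<bar>\<dots>\<bar> \<le> (2 * C) * lam ^ n / (1 - lam)"
  proof (rule tail_bound)
    fix i
    show "\<bar>s i - s' i\<bar> \<le> 2 * C" using assms(1)[of i] assms(2)[of i] by (smt (verit))
  qed (use assms in auto)
  finally show ?thesis by simp
qed

lemma zero_by_geo:
  assumes "\<And>n. \<bar>x\<bar> \<le> K * lam ^ n"
  shows "x = 0"
proof -
  have "(\<lambda>n. K * lam ^ n) \<longlonglongrightarrow> K * 0"
    using lam0 lam1 by (intro tendsto_mult tendsto_const LIMSEQ_power_zero) auto
  then have "\<bar>x\<bar> \<le> 0" using assms by (intro LIMSEQ_le_const[of "\<lambda>n. K * lam ^ n"]) auto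
  then show ?thesis by simp
qed

lemma gap:
  assumes nosol: "\<not> (\<exists>w. gtds_solution lam t as w)"
  shows "\<exists>\<epsilon>>0. \<forall>s. (\<forall>i. s i \<in> set as) \<longrightarrow> \<epsilon> \<le> \<bar>V s - t\<bar>"
proof (rule ccontr)
  assume H: "\<not> (\<exists>\<epsilon>>0. \<forall>s. (\<forall>i. s i \<in> set as) \<longrightarrow> \<epsilon> \<le> \<bar>V s - t\<bar>)"
  define Good where "Good u \<longleftrightarrow> (\<forall>\<epsilon>>0. \<exists>s. (\<forall>i. s i \<in> set as) \<and> (\<forall>i<length u. s i = u!i) \<and> \<bar>V s - t\<bar> < \<epsilon>)" for u
  have G0: "Good []" using H unfolding Good_def by (auto simp: not_le)
  have step: "\<exists>a. a \<in> set as \<and> Good (u @ [a])" if Gu: "Good u" for u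
  proof (rule ccontr)
    assume no: "\<not> (\<exists>a. a \<in> set as \<and> Good (u @ [a]))"
    have "\<forall>a\<in>set as. \<exists>\<epsilon>>0. \<forall>s. (\<forall>i. s i \<in> set as) \<and> (\<forall>i<length (u@[a]). s i = (u@[a])!i) \<longrightarrow> \<not> \<bar>V s - t\<bar> < \<epsilon>"
      using no unfolding Good_def by blast
    from bchoice[OF this] obtain E where EE: "\<forall>a\<in>set as. E a > 0 \<and> (\<forall>s. (\<forall>i. s i \<in> set as) \<and> (\<forall>i<length (u@[a]). s i = (u@[a])!i) \<longrightarrow> \<not> \<bar>V s - t\<bar> < E a)"
      by blast
    have E: "\<And>a. a \<in> set as \<Longrightarrow> E a > 0"
      "\<And>a s. a \<in> set as \<Longrightarrow> (\<forall>i. s i \<in> set as) \<Longrightarrow> (\<forall>i<length (u@[a]). s i = (u@[a])!i) \<Longrightarrow> \<not> \<bar>V s - t\<bar> < E a"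
      using EE by blast+
    obtain s1 where "\<forall>i. s1 i \<in> set as" using Gu[unfolded Good_def, rule_format, of 1] by auto
    then have ne: "set as \<noteq> {}" by auto
    define e0 where "e0 = Min (E ` set as)"
    have e0: "e0 > 0" unfolding e0_def using ne E(1) by (subst Min_gr_iff) auto
    obtain s where s: "\<forall>i. s i \<in> set as" "\<forall>i<length u. s i = u!i" "\<bar>V s - t\<bar> < e0"
      using Gu e0 unfolding Good_def by blast
    define a where "a = s (length u)"
    have a: "a \<in> set as" using s(1) a_def by auto
    have "\<forall>i<length (u@[a]). s i = (u@[a])!i"
      using s(2) a_def by (auto simp: nth_append less_Suc_eq)
    then have "\<not> \<bar>V s - t\<bar> < E a" using E(2)[OF a s(1)] by blast
    moreover have "e0 \<le> E a" unfolding e0_def using a by simp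
    ultimately show False using s(3) by simp
  qed
  define F where "F = rec_nat [] (\<lambda>n u. u @ [SOME a. a \<in> set as \<and> Good (u @ [a])])"
  have F0: "F 0 = []" and FS: "F (Suc n) = F n @ [SOME a. a \<in> set as \<and> Good (F n @ [a])]" for n
    unfolding F_def by simp_all
  have FG: "Good (F n) \<and> set (F n) \<subseteq> set as \<and> length (F n) = n" for n
  proof (induct n)
    case 0
    then show ?case using G0 F0 by simp
  next
    case (Suc n)
    then have "\<exists>a. a \<in> set as \<and> Good (F n @ [a])" using step by blast
    from someI_ex[OF this] show ?case using Suc FS[of n] by auto
  qed
  have Fpre: "i < n \<Longrightarrow> F n ! i = F (Suc i) ! i" for i n
  proof (induct n)
    case (Suc n)
    then show ?case using FG[of n] FS[of n] by (cases "i < n") (auto simp: nth_append less_Suc_eq)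
  qed simp
  define s where "s i = F (Suc i) ! i" for i
  have s_in: "s i \<in> set as" for i
    using FG[of "Suc i"] unfolding s_def by (metis lessI nth_mem subsetD)
  have sC: "\<bar>s i\<bar> \<le> C" for i using absC s_in by blast
  have bound: "\<bar>V s - t\<bar> \<le> (1 + 2 * C / (1 - lam)) * lam ^ n" for n
  proof -
    have "lam ^ n > 0" using lam0 by simp
    then obtain s' where s': "\<forall>i. s' i \<in> set as" "\<forall>i<length (F n). s' i = F n ! i" "\<bar>V s' - t\<bar> < lam ^ n"
      using FG[of n] unfolding Good_def by blast
    have agree: "\<And>i. i < n \<Longrightarrow> s i = s' i"
    proof -
      fix i assume i: "i < n"
      have "s' i = F n ! i" using s'(2) FG[of n] i by auto
      also have "\<dots> = s i" using Fpre[OF i] s_def by simp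
      finally show "s i = s' i" by simp
    qed
    have s'C: "\<bar>s' i\<bar> \<le> C" for i using absC s'(1) by blast
    have d: "\<bar>V s - V s'\<bar> \<le> 2 * C * lam ^ n / (1 - lam)"
      by (rule V_diff[OF sC s'C agree])
    have eq: "(1 + 2 * C / (1 - lam)) * lam ^ n = lam ^ n + 2 * C * lam ^ n / (1 - lam)"
      using lam1 by (simp add: field_simps)
    have "\<bar>V s - t\<bar> \<le> \<bar>V s - V s'\<bar> + \<bar>V s' - t\<bar>" by simp
    then show ?thesis using d s'(3) eq by linarith
  qed
  have "V s - t = 0" by (rule zero_by_geo[OF bound])
  moreover have "summable (\<lambda>i. s i * lam ^ i)" using summ sC by blast
  ultimately have "gtds_solution lam t as s"
    unfolding gtds_solution_def V_def using s_in by (auto dest: summable_sums)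
  then show False using nosol by blast
qed

end

context gctx
begin

lemma exists_N:
  assumes "eps > 0"
  shows "\<exists>N\<ge>1. 3 * C * lam ^ N / (1 - lam) < eps"
proof -
  have "(\<lambda>n. 3 * C / (1 - lam) * lam ^ n) \<longlonglongrightarrow> 3 * C / (1 - lam) * 0"
    using lam0 lam1 by (intro tendsto_mult tendsto_const LIMSEQ_power_zero) auto
  then have "eventually (\<lambda>n. 3 * C / (1 - lam) * lam ^ n < eps) sequentially"
    using assms by (intro order_tendstoD(2)) auto
  then obtain N0 where H: "\<And>n. n \<ge> N0 \<Longrightarrow> 3 * C / (1 - lam) * lam ^ n < eps"
    unfolding eventually_sequentially by blast
  have "3 * C / (1 - lam) * lam ^ (Suc N0) < eps" by (rule H) simp
  then have "3 * C * lam ^ (Suc N0) / (1 - lam) < eps" by (simp add: field_simps)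
  then show ?thesis by (intro exI[of _ "Suc N0"]) auto
qed

definition val :: "nat list \<Rightarrow> real" where
  "val \<tau> = (\<Sum>i<length \<tau>. lam ^ i * as ! (\<tau> ! i))"

definition ext :: "nat list \<Rightarrow> nat \<Rightarrow> real" where
  "ext \<tau> i = (if i < length \<tau> then as ! (\<tau> ! i) else hd as)"

definition Vp :: "nat list \<Rightarrow> real" where
  "Vp \<tau> = val \<tau> + lam ^ length \<tau> * hd as / (1 - lam)"

lemma ext_in: "as \<noteq> [] \<Longrightarrow> set \<tau> \<subseteq> {..<length as} \<Longrightarrow> ext \<tau> i \<in> set as"
proof -
  assume ne: "as \<noteq> []" and st: "set \<tau> \<subseteq> {..<length as}"
  show ?thesis
  proof (cases "i < length \<tau>")
    case True
    then have "\<tau> ! i < length as" using st nth_mem by blast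
    then show ?thesis using True unfolding ext_def by simp
  qed (use ne in \<open>simp add: ext_def hd_in_set\<close>)
qed

lemma V_ext: "as \<noteq> [] \<Longrightarrow> set \<tau> \<subseteq> {..<length as} \<Longrightarrow> V (ext \<tau>) = Vp \<tau>"
proof -
  assume ne: "as \<noteq> []" and st: "set \<tau> \<subseteq> {..<length as}"
  let ?n = "length \<tau>"
  have sm: "summable (\<lambda>i. ext \<tau> i * lam ^ i)" using summ[of "ext \<tau>" C] absC ext_in[OF ne st] by blast
  have "V (ext \<tau>) = (\<Sum>i. ext \<tau> (i + ?n) * lam ^ (i + ?n)) + (\<Sum>i<?n. ext \<tau> i * lam ^ i)"
    unfolding V_def using suminf_split_initial_segment[OF sm, of ?n] by simp
  also have "(\<Sum>i. ext \<tau> (i + ?n) * lam ^ (i + ?n)) = (\<Sum>i. hd as * lam ^ (i + ?n))"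
    unfolding ext_def by simp
  also have "\<dots> = hd as * lam ^ ?n / (1 - lam)" by (rule geo_tail)
  also have "(\<Sum>i<?n. ext \<tau> i * lam ^ i) = val \<tau>"
    unfolding val_def ext_def by (intro sum.cong) auto
  finally show ?thesis unfolding Vp_def by simp
qed

end

locale gctx2 = gctx +
  fixes eps :: real and N :: nat
  assumes eps0: "eps > 0"
    and gapP: "\<And>s. (\<forall>i. s i \<in> set as) \<Longrightarrow> eps \<le> \<bar>V s - t\<bar>"
    and N1: "N \<ge> 1"
    and Nsmall: "3 * C * lam ^ N / (1 - lam) < eps"
begin

lemma F1: "as \<noteq> [] \<Longrightarrow> set \<tau> \<subseteq> {..<length as} \<Longrightarrow> eps \<le> \<bar>Vp \<tau> - t\<bar>"
  using gapP[of "ext \<tau>"] ext_in V_ext by auto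

lemma extC: "as \<noteq> [] \<Longrightarrow> set \<tau> \<subseteq> {..<length as} \<Longrightarrow> \<bar>ext \<tau> i\<bar> \<le> C"
  using ext_in absC by blast

lemma D_nonneg: "0 \<le> C * lam ^ N / (1 - lam)"
  using C_nonneg lam0 lam1 by simp

lemma F2:
  assumes ne: "as \<noteq> []" and st: "set \<iota> \<subseteq> {..<length as}" and len: "length \<iota> \<ge> N"
  shows "(val \<iota> < t \<longleftrightarrow> Vp (take N \<iota>) < t) \<and> (val \<iota> \<le> t \<longleftrightarrow> Vp (take N \<iota>) < t)"
proof -
  define D where "D = C * lam ^ N / (1 - lam)"
  have st2: "set (take N \<iota>) \<subseteq> {..<length as}" using st by (meson order_trans set_take_subset)
  have "\<bar>V (ext \<iota>) - V (ext (take N \<iota>))\<bar> \<le> 2 * C * lam ^ N / (1 - lam)"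
    by (rule V_diff) (use extC[OF ne st] extC[OF ne st2] len in \<open>auto simp: ext_def\<close>)
  then have d1: "\<bar>Vp \<iota> - Vp (take N \<iota>)\<bar> \<le> 2 * D"
    using V_ext[OF ne st] V_ext[OF ne st2] unfolding D_def by simp
  have "\<bar>lam ^ length \<iota> * hd as / (1 - lam)\<bar> \<le> D"
  proof -
    have "lam ^ length \<iota> \<le> lam ^ N" using len lam0 lam1 by (intro power_decreasing) auto
    moreover have "\<bar>hd as\<bar> \<le> C" using absC ne hd_in_set by blast
    ultimately have "lam ^ length \<iota> * \<bar>hd as\<bar> \<le> lam ^ N * C"
      using lam0 C_nonneg by (intro mult_mono) auto
    then show ?thesis unfolding D_def using lam0 lam1
      by (simp add: abs_mult divide_right_mono mult.commute)
  qed
  then have d2: "\<bar>val \<iota> - Vp \<iota>\<bar> \<le> D" unfolding Vp_def by simp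
  have g: "eps \<le> \<bar>Vp (take N \<iota>) - t\<bar>" by (rule F1[OF ne st2])
  have D3: "3 * D < eps" using Nsmall unfolding D_def by simp
  show ?thesis using d1 d2 g D3 by (smt (verit))
qed

lemma F3:
  assumes ne: "as \<noteq> []" and st: "\<And>i. \<iota> i < length as"
  shows "eps \<le> \<bar>V (\<lambda>i. as ! \<iota> i) - t\<bar> \<and> (V (\<lambda>i. as ! \<iota> i) < t \<longleftrightarrow> Vp (map \<iota> [0..<N]) < t)"
proof -
  let ?s = "\<lambda>i. as ! \<iota> i" and ?p = "map \<iota> [0..<N]"
  have sin: "?s i \<in> set as" for i using st by simp
  have st2: "set ?p \<subseteq> {..<length as}" using st by auto
  have "\<bar>V ?s - V (ext ?p)\<bar> \<le> 2 * C * lam ^ N / (1 - lam)"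
    by (rule V_diff) (use absC sin extC[OF ne st2] in \<open>auto simp: ext_def\<close>)
  then have d1: "\<bar>V ?s - Vp ?p\<bar> \<le> 2 * (C * lam ^ N / (1 - lam))"
    using V_ext[OF ne st2] by simp
  have g1: "eps \<le> \<bar>V ?s - t\<bar>" by (rule gapP) (use sin in blast)
  have g2: "eps \<le> \<bar>Vp ?p - t\<bar>" by (rule F1[OF ne st2])
  define D where "D = C * lam ^ N / (1 - lam)"
  have D3: "3 * D < eps" using Nsmall unfolding D_def by simp
  have D0: "0 \<le> D" using D_nonneg unfolding D_def .
  show ?thesis using d1 g1 g2 D3 D0 unfolding D_def[symmetric] by (smt (verit))
qed

end

lemma take_snoc_take: "take N (xs @ [i]) = take N (take N xs @ [i])"
  by (cases "length xs < N") (auto simp: take_append min_def)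

lemma pump_gen:
  fixes h :: "'a list \<Rightarrow> 'c"
  assumes cong: "\<And>u u' v. h u = h u' \<Longrightarrow> h (u @ v) = h (u' @ v)"
    and inX: "\<And>w. set w \<subseteq> S \<Longrightarrow> h w \<in> X" and fin: "finite X"
  shows "set w \<subseteq> S \<Longrightarrow> P (h w) \<Longrightarrow> \<exists>w'. set w' \<subseteq> S \<and> length w' < card X \<and> P (h w')"
proof (induction "length w" arbitrary: w rule: less_induct)
  case less
  show ?case
  proof (cases "length w < card X")
    case True
    then show ?thesis using less.prems by blast
  next
    case False
    let ?f = "\<lambda>i. h (take i w)"
    have "set (take i w) \<subseteq> S" for i using less.prems(1) set_take_subset by (metis order_trans)
    then have sub: "?f ` {..length w} \<subseteq> X" using inX by auto
    have "\<not> inj_on ?f {..length w}"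
    proof
      assume "inj_on ?f {..length w}"
      then have "card {..length w} \<le> card X" using card_inj_on_le[OF _ sub fin] by blast
      then show False using False by simp
    qed
    then obtain i j where ij: "i \<le> length w" "j \<le> length w" "i \<noteq> j" "?f i = ?f j"
      unfolding inj_on_def by auto
    then obtain a b where ab: "a < b" "b \<le> length w" "?f a = ?f b"
      by (metis linorder_neqE_nat)
    define w' where "w' = take a w @ drop b w"
    have "h w' = h (take b w @ drop b w)" unfolding w'_def by (rule cong) (use ab in simp)
    then have hw: "h w' = h w" by simp
    have lw: "length w' < length w" unfolding w'_def using ab by simp
    have sw: "set w' \<subseteq> S" unfolding w'_def using less.prems(1)
      by (auto dest: in_set_takeD in_set_dropD)
    show ?thesis using less(1)[OF lw sw] less.prems(2) hw by simp
  qed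
qed

lemma koenig_gen:
  fixes P :: "'a list \<Rightarrow> bool"
  assumes ex: "\<And>n. \<exists>xs. length xs = n \<and> P xs"
    and pre: "\<And>xs x. P (xs @ [x]) \<Longrightarrow> P xs"
    and bnd: "\<And>xs. P xs \<Longrightarrow> set xs \<subseteq> X" and fin: "finite X"
  shows "\<exists>f. \<forall>n. P (map f [0..<n])"
proof -
  have pre2: "P (xs @ ys) \<Longrightarrow> P xs" for xs ys
  proof (induct ys rule: rev_induct)
    case (snoc y ys)
    then show ?case using pre[of "xs @ ys" y] by simp
  qed simp
  define E where "E u \<longleftrightarrow> (\<forall>n. \<exists>v. length v = n \<and> P (u @ v))" for u
  have E0: "E []" using ex unfolding E_def by simp
  have step: "\<exists>x. E (u @ [x])" if Eu: "E u" for u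
  proof (rule ccontr)
    assume no: "\<not> (\<exists>x. E (u @ [x]))"
    then have "\<forall>x. \<exists>n. \<forall>v. length v = n \<longrightarrow> \<not> P (u @ [x] @ v)" unfolding E_def by auto
    from choice[OF this] obtain nx where "\<forall>x v. length v = nx x \<longrightarrow> \<not> P (u @ [x] @ v)" by blast
    then have nx: "\<And>x v. length v = nx x \<Longrightarrow> \<not> P (u @ [x] @ v)" by blast
    define n0 where "n0 = Max (insert 0 (nx ` X))"
    obtain v where v: "length v = Suc n0" "P (u @ v)" using Eu unfolding E_def by blast
    then obtain x v' where xv: "v = x # v'" "length v' = n0" by (cases v) auto
    have "x \<in> X" using bnd[OF v(2)] xv by auto
    then have "nx x \<le> n0" unfolding n0_def using fin by simp
    then have "P (u @ [x] @ take (nx x) v')" using v(2) xv pre2[of "u @ [x] @ take (nx x) v'" "drop (nx x) v'"]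
      by simp
    then show False using nx[of "take (nx x) v'" x] xv \<open>nx x \<le> n0\<close> by simp
  qed
  define U where "U = rec_nat [] (\<lambda>n u. u @ [SOME x. E (u @ [x])])"
  have U0: "U 0 = []" and US: "U (Suc n) = U n @ [SOME x. E (U n @ [x])]" for n
    unfolding U_def by simp_all
  have UE: "E (U n) \<and> length (U n) = n" for n
  proof (induct n)
    case 0
    then show ?case using E0 U0 by simp
  next
    case (Suc n)
    then have "\<exists>x. E (U n @ [x])" using step by blast
    from someI_ex[OF this] show ?case using Suc US[of n] by auto
  qed
  have Upre: "i < n \<Longrightarrow> U n ! i = U (Suc i) ! i" for i n
  proof (induct n)
    case (Suc n)
    then show ?case using UE[of n] US[of n] by (cases "i < n") (auto simp: nth_append less_Suc_eq)
  qed simp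
  define f where "f i = U (Suc i) ! i" for i
  have "map f [0..<n] = U n" for n
  proof (rule nth_equalityI)
    show "length (map f [0..<n]) = length (U n)" using UE[of n] by simp
    fix i assume "i < length (map f [0..<n])"
    then have i: "i < n" by simp
    then have "map f [0..<n] ! i = U (Suc i) ! i" unfolding f_def by simp
    also have "\<dots> = U n ! i" using Upre[OF i] by simp
    finally show "map f [0..<n] ! i = U n ! i" .
  qed
  moreover have "P (U n)" for n
  proof -
    obtain v where "length v = 0" "P (U n @ v)" using UE[of n] unfolding E_def by blast
    then show ?thesis by simp
  qed
  ultimately show ?thesis by (intro exI[of _ f]) auto
qed

context gctx2
begin

definition lrun :: "dsa \<Rightarrow> nat list \<Rightarrow> nat list \<Rightarrow> bool" where
  "lrun A w \<rho> \<longleftrightarrow> length \<rho> = Suc (length w) \<and> \<rho> ! 0 = init A \<and>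
     (\<forall>j<length w. \<exists>i<length as. map_of (tab A) (\<rho> ! j, w ! j, \<rho> ! Suc j) = Some i)"

definition lidx :: "dsa \<Rightarrow> nat list \<Rightarrow> nat list \<Rightarrow> nat list" where
  "lidx A w \<rho> = map (\<lambda>j. the (map_of (tab A) (\<rho> ! j, w ! j, \<rho> ! Suc j))) [0..<length w]"

definition T :: "nat list set" where "T = {\<tau>. length \<tau> \<le> N \<and> set \<tau> \<subseteq> {..<length as}}"

definition GoodW :: "bool \<Rightarrow> nat list set \<Rightarrow> dsa \<Rightarrow> nat list \<Rightarrow> bool" where
  "GoodW acc G A w \<longleftrightarrow> (\<exists>\<rho>. lrun A w \<rho> \<and> (acc \<longrightarrow> \<rho> ! length w \<in> set (final A)) \<and> take N (lidx A w \<rho>) \<in> G)"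

definition Bounded :: "dsa \<Rightarrow> nat \<Rightarrow> bool" where
  "Bounded A M \<longleftrightarrow> init A \<le> M \<and> (\<forall>p s q i. map_of (tab A) (p, s, q) = Some i \<longrightarrow> q \<le> M)"

definition cfg :: "dsa \<Rightarrow> nat list \<Rightarrow> (nat \<times> nat list) set" where
  "cfg A w = {(\<rho> ! length w, take N (lidx A w \<rho>)) | \<rho>. lrun A w \<rho>}"

lemma finite_T: "finite T"
proof -
  have "T \<subseteq> {xs. set xs \<subseteq> {..<length as} \<and> length xs \<le> N}" unfolding T_def by auto
  then show ?thesis using finite_lists_length_le[of "{..<length as}" N] finite_subset by blast
qed

lemma lidx_snoc:
  assumes "length \<rho> = Suc (length u)"
  shows "lidx A (u @ [a]) (\<rho> @ [q]) = lidx A u \<rho> @ [the (map_of (tab A) (\<rho> ! length u, a, q))]"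
  unfolding lidx_def using assms by (auto simp: nth_append intro!: map_cong)

lemma lrun_snoc:
  "lrun A (u @ [a]) \<rho>' \<longleftrightarrow> (\<exists>\<rho> q i. \<rho>' = \<rho> @ [q] \<and> lrun A u \<rho> \<and> i < length as \<and>
      map_of (tab A) (\<rho> ! length u, a, q) = Some i)"
proof
  assume r: "lrun A (u @ [a]) \<rho>'"
  then have "\<rho>' \<noteq> []" unfolding lrun_def by auto
  then obtain \<rho> q where \<rho>': "\<rho>' = \<rho> @ [q]" by (metis rev_exhaust)
  have len: "length \<rho> = Suc (length u)" using r \<rho>' unfolding lrun_def by simp
  have "\<rho> ! 0 = init A" using r \<rho>' len unfolding lrun_def by (simp add: nth_append)
  moreover have "\<exists>i<length as. map_of (tab A) (\<rho> ! j, u ! j, \<rho> ! Suc j) = Some i" if j: "j < length u" for j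
    using r \<rho>' len j unfolding lrun_def
    by (auto simp: nth_append dest!: spec[of _ j])
  moreover have "\<exists>i<length as. map_of (tab A) (\<rho> ! length u, a, q) = Some i"
    using r \<rho>' len unfolding lrun_def
    by (auto simp: nth_append dest!: spec[of _ "length u"])
  ultimately show "\<exists>\<rho> q i. \<rho>' = \<rho> @ [q] \<and> lrun A u \<rho> \<and> i < length as \<and>
      map_of (tab A) (\<rho> ! length u, a, q) = Some i"
    using \<rho>' len unfolding lrun_def by blast
next
  assume "\<exists>\<rho> q i. \<rho>' = \<rho> @ [q] \<and> lrun A u \<rho> \<and> i < length as \<and>
      map_of (tab A) (\<rho> ! length u, a, q) = Some i"
  then obtain \<rho> q i where h: "\<rho>' = \<rho> @ [q]" "lrun A u \<rho>" "i < length as"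
      "map_of (tab A) (\<rho> ! length u, a, q) = Some i" by blast
  have len: "length \<rho> = Suc (length u)" using h(2) unfolding lrun_def by simp
  show "lrun A (u @ [a]) \<rho>'"
    unfolding lrun_def
  proof (intro conjI allI impI)
    show "length \<rho>' = Suc (length (u @ [a]))" using h len by simp
    show "\<rho>' ! 0 = init A" using h len unfolding lrun_def by (simp add: nth_append)
    fix j assume j: "j < length (u @ [a])"
    show "\<exists>i<length as. map_of (tab A) (\<rho>' ! j, (u @ [a]) ! j, \<rho>' ! Suc j) = Some i"
    proof (cases "j < length u")
      case True
      then show ?thesis using h len unfolding lrun_def by (auto simp: nth_append)
    next
      case False
      then have "j = length u" using j by simp
      then show ?thesis using h len by (auto simp: nth_append)
    qed
  qed
qed

lemma lidx_props:
  assumes "lrun A w \<rho>"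
  shows "length (lidx A w \<rho>) = length w" "set (lidx A w \<rho>) \<subseteq> {..<length as}"
    "\<And>j. j < length w \<Longrightarrow> map_of (tab A) (\<rho> ! j, w ! j, \<rho> ! Suc j) = Some (lidx A w \<rho> ! j)"
proof -
  show "length (lidx A w \<rho>) = length w" unfolding lidx_def by simp
  show "set (lidx A w \<rho>) \<subseteq> {..<length as}"
    using assms unfolding lidx_def lrun_def by force
  fix j assume "j < length w"
  then show "map_of (tab A) (\<rho> ! j, w ! j, \<rho> ! Suc j) = Some (lidx A w \<rho> ! j)"
    using assms unfolding lidx_def lrun_def by force
qed

lemma take_in_T: "lrun A w \<rho> \<Longrightarrow> take N (lidx A w \<rho>) \<in> T"
  using lidx_props(2)[of A w \<rho>] unfolding T_def by (auto dest: in_set_takeD)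

lemma cfg_snoc:
  "cfg A (u @ [a]) = {(q', take N (\<tau> @ [i])) | q \<tau> q' i. (q, \<tau>) \<in> cfg A u \<and> i < length as \<and>
      map_of (tab A) (q, a, q') = Some i}"
proof (intro set_eqI iffI)
  fix x assume "x \<in> cfg A (u @ [a])"
  then obtain \<rho>' where x: "x = (\<rho>' ! length (u @ [a]), take N (lidx A (u @ [a]) \<rho>'))" "lrun A (u @ [a]) \<rho>'"
    unfolding cfg_def by blast
  then obtain \<rho> q i where h: "\<rho>' = \<rho> @ [q]" "lrun A u \<rho>" "i < length as"
      "map_of (tab A) (\<rho> ! length u, a, q) = Some i" using lrun_snoc by blast
  have len: "length \<rho> = Suc (length u)" using h(2) unfolding lrun_def by simp
  have "x = (q, take N (take N (lidx A u \<rho>) @ [i]))"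
    using x(1) h len by (simp add: lidx_snoc nth_append take_append min_def)
  moreover have "(\<rho> ! length u, take N (lidx A u \<rho>)) \<in> cfg A u" using h(2) unfolding cfg_def by blast
  ultimately show "x \<in> {(q', take N (\<tau> @ [i])) | q \<tau> q' i. (q, \<tau>) \<in> cfg A u \<and> i < length as \<and>
      map_of (tab A) (q, a, q') = Some i}" using h by blast
next
  fix x assume "x \<in> {(q', take N (\<tau> @ [i])) | q \<tau> q' i. (q, \<tau>) \<in> cfg A u \<and> i < length as \<and>
      map_of (tab A) (q, a, q') = Some i}"
  then obtain q \<tau> q' i where h: "x = (q', take N (\<tau> @ [i]))" "(q, \<tau>) \<in> cfg A u" "i < length as"
      "map_of (tab A) (q, a, q') = Some i" by blast
  then obtain \<rho> where r: "q = \<rho> ! length u" "\<tau> = take N (lidx A u \<rho>)" "lrun A u \<rho>"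
    unfolding cfg_def by blast
  have len: "length \<rho> = Suc (length u)" using r(3) unfolding lrun_def by simp
  have run: "lrun A (u @ [a]) (\<rho> @ [q'])" using lrun_snoc r h by blast
  have "x = ((\<rho> @ [q']) ! length (u @ [a]), take N (lidx A (u @ [a]) (\<rho> @ [q'])))"
    using h r len by (simp add: lidx_snoc nth_append take_append min_def)
  then show "x \<in> cfg A (u @ [a])" using run unfolding cfg_def by blast
qed

lemma cfg_cong: "cfg A u = cfg A u' \<Longrightarrow> cfg A (u @ v) = cfg A (u' @ v)"
proof (induct v arbitrary: u u')
  case (Cons a v)
  have "cfg A (u @ [a]) = cfg A (u' @ [a])" using Cons.prems by (simp add: cfg_snoc)
  then have "cfg A ((u @ [a]) @ v) = cfg A ((u' @ [a]) @ v)" by (rule Cons.hyps)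
  then show ?case by simp
qed simp

lemma cfg_bound:
  assumes "Bounded A M"
  shows "cfg A w \<subseteq> {..M} \<times> T"
proof
  fix x assume "x \<in> cfg A w"
  then obtain \<rho> where x: "x = (\<rho> ! length w, take N (lidx A w \<rho>))" "lrun A w \<rho>"
    unfolding cfg_def by blast
  have "\<rho> ! length w \<le> M"
  proof (cases "length w")
    case 0
    then show ?thesis using x(2) assms unfolding lrun_def Bounded_def by simp
  next
    case (Suc j)
    then obtain i where "map_of (tab A) (\<rho> ! j, w ! j, \<rho> ! Suc j) = Some i"
      using x(2) unfolding lrun_def by auto
    then show ?thesis using assms Suc unfolding Bounded_def by auto
  qed
  then show "x \<in> {..M} \<times> T" using x take_in_T by auto
qed

lemma GoodW_cfg: "GoodW acc G A w \<longleftrightarrow> (\<exists>(q, \<tau>)\<in>cfg A w. (acc \<longrightarrow> q \<in> set (final A)) \<and> \<tau> \<in> G)"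
  unfolding GoodW_def cfg_def by blast

lemma pump:
  assumes B: "Bounded A M" and K: "2 ^ (Suc M * card T) \<le> K"
  shows "(\<forall>w. set w \<subseteq> S \<longrightarrow> GoodW acc G A w) \<longleftrightarrow> (\<forall>w. set w \<subseteq> S \<and> length w \<le> K \<longrightarrow> GoodW acc G A w)"
proof (intro iffI allI impI)
  fix w assume "\<forall>w. set w \<subseteq> S \<and> length w \<le> K \<longrightarrow> GoodW acc G A w" "set w \<subseteq> S"
  show "GoodW acc G A w"
  proof (rule ccontr)
    assume "\<not> GoodW acc G A w"
    then have P: "\<not> (\<exists>(q, \<tau>)\<in>cfg A w. (acc \<longrightarrow> q \<in> set (final A)) \<and> \<tau> \<in> G)" using GoodW_cfg by blast
    have fin: "finite (Pow ({..M} \<times> T))" using finite_T by simp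
    obtain w' where w': "set w' \<subseteq> S" "length w' < card (Pow ({..M} \<times> T))"
      "\<not> (\<exists>(q, \<tau>)\<in>cfg A w'. (acc \<longrightarrow> q \<in> set (final A)) \<and> \<tau> \<in> G)"
      using pump_gen[of "cfg A" S "Pow ({..M} \<times> T)" w "\<lambda>C. \<not> (\<exists>(q, \<tau>)\<in>C. (acc \<longrightarrow> q \<in> set (final A)) \<and> \<tau> \<in> G)"]
        cfg_cong cfg_bound[OF B] fin \<open>set w \<subseteq> S\<close> P by blast
    have "card (Pow ({..M} \<times> T)) = 2 ^ (Suc M * card T)"
      using finite_T by (simp add: card_Pow card_cartesian_product)
    then have "length w' \<le> K" using w'(2) K by simp
    then have "GoodW acc G A w'" using \<open>\<forall>w. set w \<subseteq> S \<and> length w \<le> K \<longrightarrow> GoodW acc G A w\<close> w'(1) by blast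
    then show False using w'(3) GoodW_cfg by blast
  qed
qed auto

end

context gctx2
begin

definition Gl :: "nat list set" where "Gl = {\<tau>\<in>T. if length \<tau> < N then val \<tau> < t else Vp \<tau> < t}"
definition Ge :: "nat list set" where "Ge = {\<tau>\<in>T. if length \<tau> < N then val \<tau> \<le> t else Vp \<tau> < t}"
definition Gi :: "nat list set" where "Gi = {\<tau>\<in>T. length \<tau> < N \<or> Vp \<tau> < t}"

lemma delta_iff: "tr \<in> delta as A \<longleftrightarrow> (\<exists>i<length as. map_of (tab A) tr = Some i)"
  unfolding delta_def by auto

lemma fin_ex:
  "(\<exists>\<rho>. fin_accepting as A w \<rho> \<and> P (fin_value lam as A w \<rho>)) \<longleftrightarrow>
   (\<exists>\<rho>l. lrun A w \<rho>l \<and> \<rho>l ! length w \<in> set (final A) \<and> P (val (lidx A w \<rho>l)))"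
proof
  assume "\<exists>\<rho>. fin_accepting as A w \<rho> \<and> P (fin_value lam as A w \<rho>)"
  then obtain \<rho> where r: "fin_accepting as A w \<rho>" "P (fin_value lam as A w \<rho>)" by blast
  define \<rho>l where "\<rho>l = map \<rho> [0..<Suc (length w)]"
  have nth: "j \<le> length w \<Longrightarrow> \<rho>l ! j = \<rho> j" for j unfolding \<rho>l_def
    by (simp add: nth_map_upt del: upt_Suc)
  have "lrun A w \<rho>l"
    unfolding lrun_def using r(1) nth unfolding fin_accepting_def fin_run_def delta_iff
    by (auto simp: \<rho>l_def simp del: upt_Suc)
  moreover have "\<rho>l ! length w \<in> set (final A)"
    using r(1) nth unfolding fin_accepting_def by simp
  moreover have "val (lidx A w \<rho>l) = fin_value lam as A w \<rho>"
    unfolding val_def lidx_def fin_value_def gamma_def using nth by (intro sum.cong) auto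
  ultimately show "\<exists>\<rho>l. lrun A w \<rho>l \<and> \<rho>l ! length w \<in> set (final A) \<and> P (val (lidx A w \<rho>l))"
    using r(2) by metis
next
  assume "\<exists>\<rho>l. lrun A w \<rho>l \<and> \<rho>l ! length w \<in> set (final A) \<and> P (val (lidx A w \<rho>l))"
  then obtain \<rho>l where r: "lrun A w \<rho>l" "\<rho>l ! length w \<in> set (final A)" "P (val (lidx A w \<rho>l))" by blast
  define \<rho> where "\<rho> i = \<rho>l ! i" for i
  have "fin_accepting as A w \<rho>"
    unfolding fin_accepting_def fin_run_def delta_iff \<rho>_def using r(1,2) unfolding lrun_def by auto
  moreover have "val (lidx A w \<rho>l) = fin_value lam as A w \<rho>"
    unfolding val_def lidx_def fin_value_def gamma_def \<rho>_def by (intro sum.cong) auto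
  ultimately show "\<exists>\<rho>. fin_accepting as A w \<rho> \<and> P (fin_value lam as A w \<rho>)" using r(3) by metis
qed

lemma lrun_ne: "lrun A w \<rho> \<Longrightarrow> w \<noteq> [] \<Longrightarrow> as \<noteq> []"
  unfolding lrun_def by (cases w) auto

lemma good_lt:
  assumes r: "lrun A w \<rho>"
  shows "(val (lidx A w \<rho>) < t \<longleftrightarrow> take N (lidx A w \<rho>) \<in> Gl) \<and>
         (val (lidx A w \<rho>) \<le> t \<longleftrightarrow> take N (lidx A w \<rho>) \<in> Ge)"
proof (cases "length w < N")
  case True
  then have "take N (lidx A w \<rho>) = lidx A w \<rho>" using lidx_props(1)[OF r] by simp
  then show ?thesis using take_in_T[OF r] True lidx_props(1)[OF r] unfolding Gl_def Ge_def by auto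
next
  case False
  then have "w \<noteq> []" using N1 by (cases w) auto
  then have ne: "as \<noteq> []" using lrun_ne[OF r] by blast
  have l: "length (take N (lidx A w \<rho>)) = N" using False lidx_props(1)[OF r] by simp
  show ?thesis using F2[OF ne lidx_props(2)[OF r]] False lidx_props(1)[OF r] take_in_T[OF r] l
    unfolding Gl_def Ge_def by auto
qed

lemma U_fin_lt:
  "fin_lt_universal lam as t A \<longleftrightarrow> (\<forall>w. set w \<subseteq> set (alph A) \<longrightarrow> GoodW True Gl A w)"
proof -
  have "fin_aut_val lam as A w < ereal t \<longleftrightarrow> GoodW True Gl A w" for w
  proof -
    have "fin_aut_val lam as A w < ereal t \<longleftrightarrow> (\<exists>\<rho>. fin_accepting as A w \<rho> \<and> fin_value lam as A w \<rho> < t)"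
      unfolding fin_aut_val_def Inf_less_iff by auto
    also have "\<dots> \<longleftrightarrow> (\<exists>\<rho>l. lrun A w \<rho>l \<and> \<rho>l ! length w \<in> set (final A) \<and> val (lidx A w \<rho>l) < t)"
      by (rule fin_ex)
    also have "\<dots> \<longleftrightarrow> GoodW True Gl A w"
      unfolding GoodW_def using good_lt by blast
    finally show ?thesis .
  qed
  then show ?thesis unfolding fin_lt_universal_def fin_words_def by auto
qed

lemma fin_val_finite:
  "finite {ereal (fin_value lam as A w \<rho>) | \<rho>. fin_accepting as A w \<rho>}"
proof -
  have "{ereal (fin_value lam as A w \<rho>) | \<rho>. fin_accepting as A w \<rho>} \<subseteq>
        (\<lambda>\<tau>. ereal (val \<tau>)) ` {\<tau>. set \<tau> \<subseteq> {..<length as} \<and> length \<tau> = length w}"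
  proof
    fix x assume "x \<in> {ereal (fin_value lam as A w \<rho>) | \<rho>. fin_accepting as A w \<rho>}"
    then obtain \<rho> where "x = ereal (fin_value lam as A w \<rho>)" "fin_accepting as A w \<rho>" by blast
    then have "\<exists>\<rho>l. lrun A w \<rho>l \<and> \<rho>l ! length w \<in> set (final A) \<and> x = ereal (val (lidx A w \<rho>l))"
      using fin_ex[of A w "\<lambda>v. x = ereal v"] by blast
    then obtain \<rho>l where "lrun A w \<rho>l" "x = ereal (val (lidx A w \<rho>l))" by blast
    then show "x \<in> (\<lambda>\<tau>. ereal (val \<tau>)) ` {\<tau>. set \<tau> \<subseteq> {..<length as} \<and> length \<tau> = length w}"
      using lidx_props(1,2) by blast
  qed
  moreover have "finite {\<tau>. set \<tau> \<subseteq> {..<length as} \<and> length \<tau> = length w}"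
    by (rule finite_lists_length_eq) simp
  ultimately show ?thesis using finite_subset by blast
qed

lemma U_fin_le:
  "fin_le_universal lam as t A \<longleftrightarrow> (\<forall>w. set w \<subseteq> set (alph A) \<longrightarrow> GoodW True Ge A w)"
proof -
  have "fin_aut_val lam as A w \<le> ereal t \<longleftrightarrow> GoodW True Ge A w" for w
  proof -
    let ?S = "{ereal (fin_value lam as A w \<rho>) | \<rho>. fin_accepting as A w \<rho>}"
    have "fin_aut_val lam as A w \<le> ereal t \<longleftrightarrow> (\<exists>\<rho>. fin_accepting as A w \<rho> \<and> fin_value lam as A w \<rho> \<le> t)"
    proof
      assume le: "fin_aut_val lam as A w \<le> ereal t"
      have ne: "?S \<noteq> {}"
      proof
        assume "?S = {}"
        then have "fin_aut_val lam as A w = \<infinity>" unfolding fin_aut_val_def by (simp add: top_ereal_def)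
        then show False using le by simp
      qed
      have "Inf ?S \<in> ?S" using Min_Inf[OF fin_val_finite ne] Min_in[OF fin_val_finite ne] by simp
      then show "\<exists>\<rho>. fin_accepting as A w \<rho> \<and> fin_value lam as A w \<rho> \<le> t"
        using le unfolding fin_aut_val_def by auto
    next
      assume "\<exists>\<rho>. fin_accepting as A w \<rho> \<and> fin_value lam as A w \<rho> \<le> t"
      then obtain \<rho> where "fin_accepting as A w \<rho>" "fin_value lam as A w \<rho> \<le> t" by blast
      then have "Inf ?S \<le> ereal (fin_value lam as A w \<rho>)" by (intro Inf_lower) blast
      then show "fin_aut_val lam as A w \<le> ereal t"
        unfolding fin_aut_val_def using \<open>fin_value lam as A w \<rho> \<le> t\<close> by (meson ereal_less_eq(3) order_trans)
    qed
    also have "\<dots> \<longleftrightarrow> (\<exists>\<rho>l. lrun A w \<rho>l \<and> \<rho>l ! length w \<in> set (final A) \<and> val (lidx A w \<rho>l) \<le> t)"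
      by (rule fin_ex)
    also have "\<dots> \<longleftrightarrow> GoodW True Ge A w"
      unfolding GoodW_def using good_lt by blast
    finally show ?thesis .
  qed
  then show ?thesis unfolding fin_le_universal_def fin_words_def by auto
qed

end

context gctx2
begin

definition iota :: "dsa \<Rightarrow> (nat \<Rightarrow> nat) \<Rightarrow> (nat \<Rightarrow> nat) \<Rightarrow> nat \<Rightarrow> nat" where
  "iota A w \<rho> i = the (map_of (tab A) (\<rho> i, w i, \<rho> (Suc i)))"

lemma inf_run_iota:
  "inf_run as A w \<rho> \<Longrightarrow> iota A w \<rho> i < length as \<and> map_of (tab A) (\<rho> i, w i, \<rho> (Suc i)) = Some (iota A w \<rho> i)"
proof -
  assume "inf_run as A w \<rho>"
  then obtain ia where "ia < length as" "map_of (tab A) (\<rho> i, w i, \<rho> (Suc i)) = Some ia"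
    unfolding inf_run_def delta_iff by blast
  then show ?thesis unfolding iota_def by simp
qed

lemma inf_value_V: "inf_value lam as A w \<rho> = V (\<lambda>i. as ! iota A w \<rho> i)"
  unfolding inf_value_def V_def gamma_def iota_def by (simp add: mult.commute)

lemma inf_run_ne: "inf_run as A w \<rho> \<Longrightarrow> as \<noteq> []"
  using inf_run_iota[of A w \<rho> 0] by auto

lemma inf_lt_iff:
  "inf_aut_val lam as A w < ereal t \<longleftrightarrow> (\<exists>\<rho>. inf_run as A w \<rho> \<and> Vp (map (iota A w \<rho>) [0..<N]) < t)"
proof -
  have "inf_aut_val lam as A w < ereal t \<longleftrightarrow> (\<exists>\<rho>. inf_run as A w \<rho> \<and> inf_value lam as A w \<rho> < t)"
    unfolding inf_aut_val_def Inf_less_iff by auto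
  also have "\<dots> \<longleftrightarrow> (\<exists>\<rho>. inf_run as A w \<rho> \<and> Vp (map (iota A w \<rho>) [0..<N]) < t)"
    using F3 inf_run_ne inf_run_iota inf_value_V by metis
  finally show ?thesis .
qed

lemma inf_le_iff:
  "inf_aut_val lam as A w \<le> ereal t \<longleftrightarrow> (\<exists>\<rho>. inf_run as A w \<rho> \<and> Vp (map (iota A w \<rho>) [0..<N]) < t)"
proof
  assume "\<exists>\<rho>. inf_run as A w \<rho> \<and> Vp (map (iota A w \<rho>) [0..<N]) < t"
  then have "inf_aut_val lam as A w < ereal t" using inf_lt_iff by blast
  then show "inf_aut_val lam as A w \<le> ereal t" by simp
next
  assume le: "inf_aut_val lam as A w \<le> ereal t"
  show "\<exists>\<rho>. inf_run as A w \<rho> \<and> Vp (map (iota A w \<rho>) [0..<N]) < t"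
  proof (rule ccontr)
    assume no: "\<not> (\<exists>\<rho>. inf_run as A w \<rho> \<and> Vp (map (iota A w \<rho>) [0..<N]) < t)"
    have "ereal (t + eps) \<le> ereal (inf_value lam as A w \<rho>)" if r: "inf_run as A w \<rho>" for \<rho>
    proof -
      have ne: "as \<noteq> []" by (rule inf_run_ne[OF r])
      have st: "\<And>i. iota A w \<rho> i < length as" using inf_run_iota[OF r] by blast
      have "\<not> V (\<lambda>i. as ! iota A w \<rho> i) < t" using F3[where \<iota>="iota A w \<rho>", OF ne st] no r by blast
      then have "t + eps \<le> V (\<lambda>i. as ! iota A w \<rho> i)" using F3[where \<iota>="iota A w \<rho>", OF ne st] by linarith
      then show ?thesis using inf_value_V by simp
    qed
    then have "ereal (t + eps) \<le> inf_aut_val lam as A w"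
      unfolding inf_aut_val_def by (intro Inf_greatest) blast
    then have "ereal (t + eps) \<le> ereal t" using le by (rule order_trans)
    then show False using eps0 by simp
  qed
qed

lemma run_bound: "lrun A w \<rho> \<Longrightarrow> Bounded A M \<Longrightarrow> set \<rho> \<subseteq> {..M}"
proof
  fix x assume r: "lrun A w \<rho>" and B: "Bounded A M" and "x \<in> set \<rho>"
  then obtain j where j: "j < length \<rho>" "x = \<rho> ! j" by (metis in_set_conv_nth)
  show "x \<in> {..M}"
  proof (cases j)
    case 0
    then show ?thesis using r B j unfolding lrun_def Bounded_def by simp
  next
    case (Suc j')
    then have "j' < length w" using r j unfolding lrun_def by simp
    then obtain i where "map_of (tab A) (\<rho> ! j', w ! j', \<rho> ! Suc j') = Some i"
      using r unfolding lrun_def by blast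
    then show ?thesis using B Suc j unfolding Bounded_def by auto
  qed
qed

lemma inf_prefix:
  assumes r: "inf_run as A w \<rho>"
  shows "lrun A (map w [0..<n]) (map \<rho> [0..<Suc n])"
    "lidx A (map w [0..<n]) (map \<rho> [0..<Suc n]) = map (iota A w \<rho>) [0..<n]"
proof -
  show "lrun A (map w [0..<n]) (map \<rho> [0..<Suc n])"
    unfolding lrun_def using r inf_run_iota[OF r] unfolding inf_run_def
    by (auto simp del: upt_Suc simp: nth_map_upt)
  show "lidx A (map w [0..<n]) (map \<rho> [0..<Suc n]) = map (iota A w \<rho>) [0..<n]"
    unfolding lidx_def iota_def by (auto simp del: upt_Suc simp: nth_map_upt)
qed

lemma take_map_upt: "take N (map f [0..<n]) = map f [0..<min n N]"
  by (simp add: take_map min_def)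

lemma U_inf:
  assumes B: "Bounded A M"
  shows "(\<forall>w\<in>inf_words A. (\<exists>\<rho>. inf_run as A w \<rho> \<and> Vp (map (iota A w \<rho>) [0..<N]) < t)) \<longleftrightarrow>
         (\<forall>x. set x \<subseteq> set (alph A) \<longrightarrow> GoodW False Gi A x)"
proof (intro iffI allI impI ballI)
  fix x assume H: "\<forall>w\<in>inf_words A. (\<exists>\<rho>. inf_run as A w \<rho> \<and> Vp (map (iota A w \<rho>) [0..<N]) < t)"
    and x: "set x \<subseteq> set (alph A)"
  show "GoodW False Gi A x"
  proof (cases "x = []")
    case True
    have "lrun A [] [init A]" unfolding lrun_def by simp
    moreover have "take N (lidx A [] [init A]) \<in> Gi"
      unfolding Gi_def T_def lidx_def using N1 by simp
    ultimately show ?thesis unfolding GoodW_def True by blast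
  next
    case False
    define w where "w i = (if i < length x then x ! i else x ! 0)" for i
    have "w \<in> inf_words A" unfolding inf_words_def w_def using x False by auto
    then obtain \<rho> where r: "inf_run as A w \<rho>" "Vp (map (iota A w \<rho>) [0..<N]) < t" using H by blast
    have mw: "map w [0..<length x] = x" unfolding w_def by (intro nth_equalityI) auto
    have run: "lrun A x (map \<rho> [0..<Suc (length x)])" using inf_prefix(1)[OF r(1), of "length x"] mw by simp
    have li: "lidx A x (map \<rho> [0..<Suc (length x)]) = map (iota A w \<rho>) [0..<length x]"
      using inf_prefix(2)[OF r(1), of "length x"] mw by simp
    have "take N (lidx A x (map \<rho> [0..<Suc (length x)])) \<in> Gi"
    proof -
      have inT: "take N (lidx A x (map \<rho> [0..<Suc (length x)])) \<in> T" by (rule take_in_T[OF run])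
      show ?thesis
      proof (cases "length x < N")
        case True
        then show ?thesis using inT li unfolding Gi_def by (simp add: take_map_upt)
      next
        case False
        then have "min (length x) N = N" by simp
        then show ?thesis using inT li r(2) unfolding Gi_def by (simp add: take_map_upt)
      qed
    qed
    then show ?thesis unfolding GoodW_def using run by blast
  qed
next
  fix w assume H: "\<forall>x. set x \<subseteq> set (alph A) \<longrightarrow> GoodW False Gi A x" and w: "w \<in> inf_words A"
  define P where "P xs \<longleftrightarrow> xs = [] \<or> (lrun A (map w [0..<length xs - 1]) xs \<and>
      take N (lidx A (map w [0..<length xs - 1]) xs) \<in> Gi)" for xs
  have wl: "set (map w [0..<n]) \<subseteq> set (alph A)" for n using w unfolding inf_words_def by auto
  have ex: "\<exists>xs. length xs = n \<and> P xs" for n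
  proof (cases n)
    case 0
    then show ?thesis unfolding P_def by simp
  next
    case (Suc m)
    obtain \<rho> where "lrun A (map w [0..<m]) \<rho>" "take N (lidx A (map w [0..<m]) \<rho>) \<in> Gi"
      using H wl[of m] unfolding GoodW_def by blast
    moreover have "length \<rho> = Suc m" using calculation(1) unfolding lrun_def by simp
    ultimately show ?thesis unfolding P_def using Suc by (intro exI[of _ \<rho>]) auto
  qed
  have pre: "P xs" if "P (xs @ [x])" for xs x
  proof (cases "xs = []")
    case True
    then show ?thesis unfolding P_def by simp
  next
    case False
    then obtain m where m: "length xs = Suc m" by (cases xs) auto
    have eqw: "map w [0..<length (xs @ [x]) - 1] = map w [0..<m] @ [w m]" using m by simp
    have r: "lrun A (map w [0..<m] @ [w m]) (xs @ [x])" and g: "take N (lidx A (map w [0..<m] @ [w m]) (xs @ [x])) \<in> Gi"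
      using that eqw unfolding P_def by auto
    from r obtain \<rho> q i where h: "xs @ [x] = \<rho> @ [q]" "lrun A (map w [0..<m]) \<rho>"
      using lrun_snoc by blast
    then have rx: "lrun A (map w [0..<m]) xs" by simp
    have len: "length xs = Suc (length (map w [0..<m]))" using m by simp
    have "take N (lidx A (map w [0..<m]) xs) \<in> Gi"
    proof (cases "length (lidx A (map w [0..<m]) xs) < N")
      case True
      then show ?thesis using take_in_T[OF rx] unfolding Gi_def by simp
    next
      case False
      then have "take N (lidx A (map w [0..<m]) xs @ [the (map_of (tab A) (xs ! length (map w [0..<m]), w m, x))]) =
                 take N (lidx A (map w [0..<m]) xs)" by simp
      then show ?thesis using g lidx_snoc[OF len] by simp
    qed
    then show ?thesis unfolding P_def using rx m by simp
  qed
  have bnd: "set xs \<subseteq> {..M}" if "P xs" for xs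
    using that run_bound[OF _ B] unfolding P_def by auto
  obtain f where f: "\<And>n. P (map f [0..<n])"
    using koenig_gen[of P "{..M}"] ex pre bnd by blast
  have f0: "f 0 = init A"
    using f[of 1] unfolding P_def lrun_def by simp
  have ftr: "\<exists>i<length as. map_of (tab A) (f j, w j, f (Suc j)) = Some i" for j
  proof -
    have "lrun A (map w [0..<Suc j]) (map f [0..<Suc (Suc j)])"
      using f[of "Suc (Suc j)"] unfolding P_def by (simp del: upt_Suc)
    then show ?thesis unfolding lrun_def by (auto simp del: upt_Suc simp: nth_map_upt dest!: spec[of _ j])
  qed
  have run: "inf_run as A w f" unfolding inf_run_def delta_iff using f0 ftr by blast
  have "take N (lidx A (map w [0..<N]) (map f [0..<Suc N])) \<in> Gi"
    using f[of "Suc N"] unfolding P_def by (simp del: upt_Suc)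
  then have "Vp (map (iota A w f) [0..<N]) < t"
    using inf_prefix(2)[OF run, of N] unfolding Gi_def by simp
  then show "\<exists>\<rho>. inf_run as A w \<rho> \<and> Vp (map (iota A w \<rho>) [0..<N]) < t" using run by blast
qed

end

lemma triangle_mono: "a \<le> b \<Longrightarrow> triangle a \<le> triangle b"
  unfolding triangle_def by (intro div_le_mono mult_le_mono) auto

lemma pe_mono: "a \<le> a' \<Longrightarrow> b \<le> b' \<Longrightarrow> prod_encode (a, b) \<le> prod_encode (a', b')"
  unfolding prod_encode_def using triangle_mono[of "a + b" "a' + b'"] by simp

lemma lb_bound: "length xs \<le> L \<Longrightarrow> (\<forall>x\<in>set xs. x \<le> M) \<Longrightarrow> list_encode xs \<le> lb L M"
proof (induct xs arbitrary: L)
  case Nil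
  then show ?case by simp
next
  case (Cons x xs)
  then obtain L' where L: "L = Suc L'" by (cases L) auto
  have "list_encode xs \<le> lb L' M" using Cons L by auto
  then have "prod_encode (x, list_encode xs) \<le> prod_encode (M, lb L' M)"
    using Cons.prems(2) by (intro pe_mono) auto
  then show ?case unfolding L lb_def by simp
qed

lemma ent3_le: "ent3 e \<le> e"
  unfolding ent3_def using pd_bounds by (meson order_trans)

context gctx2
begin

lemma Bounded_dec: "Bounded (dec_dsa c) (MMc c)"
  unfolding Bounded_def
proof (intro conjI allI impI)
  show "init (dec_dsa c) \<le> MMc c" unfolding dec_dsa_parts MMc_def by simp
  fix p s q i assume "map_of (tab (dec_dsa c)) (p, s, q) = Some i"
  then have "((p, s, q), i) \<in> set (tab (dec_dsa c))" by (rule map_of_SomeD)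
  then obtain e where e: "e \<in> set (list_decode (cTc c))" "dec_entry e = ((p, s, q), i)"
    unfolding dec_dsa_parts by auto
  have "q = ent3 e" using e(2) unfolding dec_entry_eq by simp
  also have "\<dots> \<le> e" by (rule ent3_le)
  also have "\<dots> \<le> cTc c" using e(1) by (rule elem_ld_le)
  finally show "q \<le> MMc c" unfolding MMc_def by simp
qed

definition Bd :: "bool \<Rightarrow> nat list set \<Rightarrow> dsa \<Rightarrow> nat list \<Rightarrow> nat list \<Rightarrow> bool" where
  "Bd acc G A w \<rho> \<longleftrightarrow> length \<rho> = Suc (length w) \<and> \<rho> ! 0 = init A \<and>
     (\<forall>j<length w. \<exists>i<length as. map_of (tab A) (\<rho> ! j, w ! j, \<rho> ! Suc j) = Some i) \<and>
     (acc \<longrightarrow> \<rho> ! length w \<in> set (final A)) \<and>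
     (\<exists>\<tau>\<in>G. length \<tau> = min (length w) N \<and> (\<forall>j<length \<tau>. map_of (tab A) (\<rho> ! j, w ! j, \<rho> ! Suc j) = Some (\<tau> ! j)))"

lemma GoodW_alt: "GoodW acc G A w \<longleftrightarrow> (\<exists>\<rho>. Bd acc G A w \<rho>)"
proof -
  have key: "take N (lidx A w \<rho>) \<in> G \<longleftrightarrow>
     (\<exists>\<tau>\<in>G. length \<tau> = min (length w) N \<and> (\<forall>j<length \<tau>. map_of (tab A) (\<rho> ! j, w ! j, \<rho> ! Suc j) = Some (\<tau> ! j)))"
    if r: "lrun A w \<rho>" for \<rho>
  proof
    assume "take N (lidx A w \<rho>) \<in> G"
    then show "\<exists>\<tau>\<in>G. length \<tau> = min (length w) N \<and> (\<forall>j<length \<tau>. map_of (tab A) (\<rho> ! j, w ! j, \<rho> ! Suc j) = Some (\<tau> ! j))"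
      using lidx_props[OF r] by (intro bexI[of _ "take N (lidx A w \<rho>)"]) auto
  next
    assume "\<exists>\<tau>\<in>G. length \<tau> = min (length w) N \<and> (\<forall>j<length \<tau>. map_of (tab A) (\<rho> ! j, w ! j, \<rho> ! Suc j) = Some (\<tau> ! j))"
    then obtain \<tau> where \<tau>: "\<tau> \<in> G" "length \<tau> = min (length w) N"
      "\<forall>j<length \<tau>. map_of (tab A) (\<rho> ! j, w ! j, \<rho> ! Suc j) = Some (\<tau> ! j)" by blast
    have "\<tau> = take N (lidx A w \<rho>)"
    proof (rule nth_equalityI)
      show "length \<tau> = length (take N (lidx A w \<rho>))" using \<tau>(2) lidx_props(1)[OF r] by simp
      fix j assume j: "j < length \<tau>"
      then have "j < length w" "j < N" using \<tau>(2) by auto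
      then show "\<tau> ! j = take N (lidx A w \<rho>) ! j" using lidx_props(3)[OF r] \<tau>(3) j by auto
    qed
    then show "take N (lidx A w \<rho>) \<in> G" using \<tau>(1) by simp
  qed
  show ?thesis unfolding GoodW_def Bd_def using key unfolding lrun_def by blast
qed

definition Bc :: "nat set \<Rightarrow> bool \<Rightarrow> nat \<Rightarrow> nat \<Rightarrow> nat \<Rightarrow> bool" where
  "Bc Gs acc c wc r \<longleftrightarrow> lenc r = Suc (lenc wc) \<and> nthc r 0 = cIc c \<and>
         (\<forall>j<lenc wc. \<exists>i<length as. foundc c (nthc r j) (nthc wc j) (nthc r (Suc j)) i) \<and>
         (acc \<longrightarrow> memc (nthc r (lenc wc)) (cFc c)) \<and>
         (\<exists>s<Suc (Max Gs). s \<in> Gs \<and> lenc s = min (lenc wc) N \<and>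
            (\<forall>j<lenc s. foundc c (nthc r j) (nthc wc j) (nthc r (Suc j)) (nthc s j)))"

lemma Phic_unfold: "Phic (length as) N Gs acc cT c \<longleftrightarrow>
   (\<forall>wc<Suc (lb (KKc cT c) (cAc c)). (lenc wc \<le> KKc cT c \<and> (\<forall>j<lenc wc. memc (nthc wc j) (cAc c))) \<longrightarrow>
      (\<exists>r<Suc (lb (Suc (lenc wc)) (MMc c)). Bc Gs acc c wc r))"
  unfolding Phic_def Bc_def by blast

lemma Bc_iff:
  assumes fin: "finite G"
  shows "Bc (list_encode ` G) acc c wc r \<longleftrightarrow> Bd acc G (dec_dsa c) (list_decode wc) (list_decode r)"
proof -
  let ?A = "dec_dsa c" and ?w = "list_decode wc" and ?\<rho> = "list_decode r"
  show ?thesis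
  proof (cases "length ?\<rho> = Suc (length ?w)")
    case False
    then show ?thesis unfolding Bc_def Bd_def lenc_correct by simp
  next
    case len: True
    have nr: "\<And>j. j \<le> length ?w \<Longrightarrow> nthc r j = ?\<rho> ! j" using len by (intro nthc_correct) simp
    have nw: "\<And>j. j < length ?w \<Longrightarrow> nthc wc j = ?w ! j" by (rule nthc_correct)
    have c1: "nthc r 0 = cIc c \<longleftrightarrow> ?\<rho> ! 0 = init ?A" using nr[of 0] by (simp add: dec_dsa_parts)
    have c2: "(\<forall>j<lenc wc. \<exists>i<length as. foundc c (nthc r j) (nthc wc j) (nthc r (Suc j)) i) \<longleftrightarrow>
        (\<forall>j<length ?w. \<exists>i<length as. map_of (tab ?A) (?\<rho> ! j, ?w ! j, ?\<rho> ! Suc j) = Some i)"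
      unfolding lenc_correct foundc_correct using nr nw by auto
    have c3: "(acc \<longrightarrow> memc (nthc r (lenc wc)) (cFc c)) \<longleftrightarrow> (acc \<longrightarrow> ?\<rho> ! length ?w \<in> set (final ?A))"
      unfolding lenc_correct memc_correct dec_dsa_parts using nr by simp
    have c4: "(\<exists>s<Suc (Max (list_encode ` G)). s \<in> list_encode ` G \<and> lenc s = min (lenc wc) N \<and>
            (\<forall>j<lenc s. foundc c (nthc r j) (nthc wc j) (nthc r (Suc j)) (nthc s j))) \<longleftrightarrow>
          (\<exists>\<tau>\<in>G. length \<tau> = min (length ?w) N \<and> (\<forall>j<length \<tau>. map_of (tab ?A) (?\<rho> ! j, ?w ! j, ?\<rho> ! Suc j) = Some (\<tau> ! j)))"
    proof
      assume "\<exists>s<Suc (Max (list_encode ` G)). s \<in> list_encode ` G \<and> lenc s = min (lenc wc) N \<and>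
            (\<forall>j<lenc s. foundc c (nthc r j) (nthc wc j) (nthc r (Suc j)) (nthc s j))"
      then obtain \<tau> where \<tau>: "\<tau> \<in> G" "length \<tau> = min (length ?w) N"
        "\<forall>j<length \<tau>. foundc c (nthc r j) (nthc wc j) (nthc r (Suc j)) (nthc (list_encode \<tau>) j)"
        unfolding lenc_correct by auto
      have "\<forall>j<length \<tau>. map_of (tab ?A) (?\<rho> ! j, ?w ! j, ?\<rho> ! Suc j) = Some (\<tau> ! j)"
      proof (intro allI impI)
        fix j assume j: "j < length \<tau>"
        then have "j < length ?w" using \<tau>(2) by simp
        then show "map_of (tab ?A) (?\<rho> ! j, ?w ! j, ?\<rho> ! Suc j) = Some (\<tau> ! j)"
          using \<tau>(3) j nr nw nthc_correct[of j "list_encode \<tau>"] unfolding foundc_correct by auto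
      qed
      then show "\<exists>\<tau>\<in>G. length \<tau> = min (length ?w) N \<and> (\<forall>j<length \<tau>. map_of (tab ?A) (?\<rho> ! j, ?w ! j, ?\<rho> ! Suc j) = Some (\<tau> ! j))"
        using \<tau> by blast
    next
      assume "\<exists>\<tau>\<in>G. length \<tau> = min (length ?w) N \<and> (\<forall>j<length \<tau>. map_of (tab ?A) (?\<rho> ! j, ?w ! j, ?\<rho> ! Suc j) = Some (\<tau> ! j))"
      then obtain \<tau> where \<tau>: "\<tau> \<in> G" "length \<tau> = min (length ?w) N"
        "\<forall>j<length \<tau>. map_of (tab ?A) (?\<rho> ! j, ?w ! j, ?\<rho> ! Suc j) = Some (\<tau> ! j)" by blast
      have le: "list_encode \<tau> < Suc (Max (list_encode ` G))" using fin \<tau>(1) by (simp add: le_imp_less_Suc)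
      have "\<forall>j<length \<tau>. foundc c (nthc r j) (nthc wc j) (nthc r (Suc j)) (nthc (list_encode \<tau>) j)"
      proof (intro allI impI)
        fix j assume j: "j < length \<tau>"
        then have "j < length ?w" using \<tau>(2) by simp
        then show "foundc c (nthc r j) (nthc wc j) (nthc r (Suc j)) (nthc (list_encode \<tau>) j)"
          using \<tau>(3) j nr nw nthc_correct[of j "list_encode \<tau>"] unfolding foundc_correct by auto
      qed
      then show "\<exists>s<Suc (Max (list_encode ` G)). s \<in> list_encode ` G \<and> lenc s = min (lenc wc) N \<and>
            (\<forall>j<lenc s. foundc c (nthc r j) (nthc wc j) (nthc r (Suc j)) (nthc s j))"
        using le \<tau> unfolding lenc_correct by (intro exI[of _ "list_encode \<tau>"]) auto
    qed
    show ?thesis unfolding Bc_def Bd_def using len c1 c2 c3 c4 unfolding lenc_correct by simp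
  qed
qed

lemma Bd_bound: "Bd acc G (dec_dsa c) w \<rho> \<Longrightarrow> list_encode \<rho> \<le> lb (Suc (length w)) (MMc c)"
proof -
  assume b: "Bd acc G (dec_dsa c) w \<rho>"
  then have "lrun (dec_dsa c) w \<rho>" unfolding Bd_def lrun_def by blast
  then have "set \<rho> \<subseteq> {..MMc c}" using run_bound Bounded_dec by blast
  then show ?thesis using b unfolding Bd_def by (intro lb_bound) auto
qed

lemma Phic_iff:
  assumes fin: "finite G"
  shows "Phic (length as) N (list_encode ` G) acc cT c \<longleftrightarrow>
    (\<forall>w. set w \<subseteq> set (alph (dec_dsa c)) \<and> length w \<le> KKc cT c \<longrightarrow> GoodW acc G (dec_dsa c) w)"
  unfolding Phic_unfold GoodW_alt
proof (intro iffI allI impI)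
  fix w assume H: "\<forall>wc<Suc (lb (KKc cT c) (cAc c)). lenc wc \<le> KKc cT c \<and> (\<forall>j<lenc wc. memc (nthc wc j) (cAc c)) \<longrightarrow>
           (\<exists>r<Suc (lb (Suc (lenc wc)) (MMc c)). Bc (list_encode ` G) acc c wc r)"
    and w: "set w \<subseteq> set (alph (dec_dsa c)) \<and> length w \<le> KKc cT c"
  let ?wc = "list_encode w"
  have "?wc \<le> lb (KKc cT c) (cAc c)"
    using w elem_ld_le unfolding dec_dsa_parts by (intro lb_bound) auto
  moreover have "lenc ?wc \<le> KKc cT c" using w by (simp add: lenc_correct)
  moreover have "\<forall>j<lenc ?wc. memc (nthc ?wc j) (cAc c)"
    using w unfolding lenc_correct memc_correct dec_dsa_parts by (auto simp: nthc_correct)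
  ultimately obtain r where "Bc (list_encode ` G) acc c ?wc r" using H by (meson le_imp_less_Suc)
  then show "\<exists>\<rho>. Bd acc G (dec_dsa c) w \<rho>" using Bc_iff[OF fin] by auto
next
  fix wc assume H: "\<forall>w. set w \<subseteq> set (alph (dec_dsa c)) \<and> length w \<le> KKc cT c \<longrightarrow> (\<exists>\<rho>. Bd acc G (dec_dsa c) w \<rho>)"
    and wc: "wc < Suc (lb (KKc cT c) (cAc c))" and c: "lenc wc \<le> KKc cT c \<and> (\<forall>j<lenc wc. memc (nthc wc j) (cAc c))"
  let ?w = "list_decode wc"
  have "set ?w \<subseteq> set (alph (dec_dsa c))"
    using c unfolding lenc_correct memc_correct dec_dsa_parts by (auto simp: nthc_correct in_set_conv_nth)
  moreover have "length ?w \<le> KKc cT c" using c by (simp add: lenc_correct)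
  ultimately obtain \<rho> where \<rho>: "Bd acc G (dec_dsa c) ?w \<rho>" using H by blast
  have "list_encode \<rho> < Suc (lb (Suc (lenc wc)) (MMc c))"
    using Bd_bound[OF \<rho>] by (simp add: lenc_correct le_imp_less_Suc)
  moreover have "Bc (list_encode ` G) acc c wc (list_encode \<rho>)" using Bc_iff[OF fin] \<rho> by simp
  ultimately show "\<exists>r<Suc (lb (Suc (lenc wc)) (MMc c)). Bc (list_encode ` G) acc c wc r" by blast
qed

lemma main_dec:
  assumes fin: "finite G"
    and Q: "\<And>A. Q A \<longleftrightarrow> (\<forall>w. set w \<subseteq> set (alph A) \<longrightarrow> GoodW acc G A w)"
  shows "decidable_dsa_prop Q"
proof -
  have "Q (dec_dsa c) \<longleftrightarrow> Phic (length as) N (list_encode ` G) acc (card T) c" for c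
  proof -
    have "Q (dec_dsa c) \<longleftrightarrow> (\<forall>w. set w \<subseteq> set (alph (dec_dsa c)) \<and> length w \<le> KKc (card T) c \<longrightarrow> GoodW acc G (dec_dsa c) w)"
      unfolding Q by (rule pump[OF Bounded_dec]) (simp add: KKc_def)
    also have "\<dots> \<longleftrightarrow> Phic (length as) N (list_encode ` G) acc (card T) c"
      by (rule Phic_iff[OF fin, symmetric])
    finally show ?thesis .
  qed
  then have "{c. Q (dec_dsa c)} = {c. Phic (length as) N (list_encode ` G) acc (card T) c}" by simp
  moreover have "decidable_set {c. Phic (length as) N (list_encode ` G) acc (card T) c}"
    by (rule decidable_from_rp[OF rp_Phic]) (use fin in simp)
  ultimately show ?thesis unfolding decidable_dsa_prop_def by simp
qed

lemma finite_G: "G \<subseteq> T \<Longrightarrow> finite G"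
  using finite_T finite_subset by blast

lemma all_dec:
  "decidable_dsa_prop (fin_lt_universal lam as t) \<and> decidable_dsa_prop (fin_le_universal lam as t) \<and>
   decidable_dsa_prop (inf_lt_universal lam as t) \<and> decidable_dsa_prop (inf_le_universal lam as t)"
proof (intro conjI)
  show "decidable_dsa_prop (fin_lt_universal lam as t)"
    by (rule main_dec[OF finite_G U_fin_lt]) (auto simp: Gl_def)
  show "decidable_dsa_prop (fin_le_universal lam as t)"
    by (rule main_dec[OF finite_G U_fin_le]) (auto simp: Ge_def)
  have inf: "(\<forall>w\<in>inf_words A. (\<exists>\<rho>. inf_run as A w \<rho> \<and> Vp (map (iota A w \<rho>) [0..<N]) < t)) \<longleftrightarrow>
         (\<forall>x. set x \<subseteq> set (alph A) \<longrightarrow> GoodW False Gi A x)" if "A = dec_dsa c" for A c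
    using U_inf[OF Bounded_dec] that by blast
  show "decidable_dsa_prop (inf_lt_universal lam as t)"
    unfolding decidable_dsa_prop_def
  proof -
    have "decidable_dsa_prop (\<lambda>A. \<forall>x. set x \<subseteq> set (alph A) \<longrightarrow> GoodW False Gi A x)"
      by (rule main_dec[OF finite_G]) (auto simp: Gi_def)
    moreover have "inf_lt_universal lam as t (dec_dsa c) \<longleftrightarrow> (\<forall>x. set x \<subseteq> set (alph (dec_dsa c)) \<longrightarrow> GoodW False Gi (dec_dsa c) x)" for c
      unfolding inf_lt_universal_def inf_lt_iff using inf by blast
    ultimately show "decidable_set {c. inf_lt_universal lam as t (dec_dsa c)}"
      unfolding decidable_dsa_prop_def by simp
  qed
  show "decidable_dsa_prop (inf_le_universal lam as t)"
    unfolding decidable_dsa_prop_def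
  proof -
    have "decidable_dsa_prop (\<lambda>A. \<forall>x. set x \<subseteq> set (alph A) \<longrightarrow> GoodW False Gi A x)"
      by (rule main_dec[OF finite_G]) (auto simp: Gi_def)
    moreover have "inf_le_universal lam as t (dec_dsa c) \<longleftrightarrow> (\<forall>x. set x \<subseteq> set (alph (dec_dsa c)) \<longrightarrow> GoodW False Gi (dec_dsa c) x)" for c
      unfolding inf_le_universal_def inf_le_iff using inf by blast
    ultimately show "decidable_set {c. inf_le_universal lam as t (dec_dsa c)}"
      unfolding decidable_dsa_prop_def by simp
  qed
qed

end

theorem theorem30:
  fixes lam t :: real and as :: "real list"
  assumes "lam \<in> \<rat>" and "0 < lam" and "lam < 1"
    and "t \<in> \<rat>" and "\<forall>a \<in> set as. a \<in> \<rat>"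
    and "\<not> (\<exists>w. gtds_solution lam t as w)"
  shows "decidable_dsa_prop (fin_lt_universal lam as t)
       \<and> decidable_dsa_prop (fin_le_universal lam as t)
       \<and> decidable_dsa_prop (inf_lt_universal lam as t)
       \<and> decidable_dsa_prop (inf_le_universal lam as t)"
proof -
  interpret g: gctx lam t as using assms(2,3) by unfold_locales
  obtain eps where eps: "eps > 0" "\<forall>s. (\<forall>i. s i \<in> set as) \<longrightarrow> eps \<le> \<bar>g.V s - t\<bar>"
    using g.gap[OF assms(6)] by blast
  obtain N where N: "N \<ge> 1" "3 * g.C * lam ^ N / (1 - lam) < eps"
    using g.exists_N[OF eps(1)] by blast
  interpret g2: gctx2 lam t as eps N
    using eps N by unfold_locales auto
  show ?thesis by (rule g2.all_dec)
qed

end
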